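(* A finite tree has cutwidth at most $2$ if and only if, for some $n$, it is (isomorphic to) a subgraph of some graph homeomorphic to $G_n$.
   Context: A graph with $n$ vertices has cutwidth at most $2$ if its vertices can be numbered $1,\ldots,n$ (bijectively) so that for every $i=1,\ldots,n-1$ there are at most two edges $(u,v)$ with $u\le i<v$. For $n\ge 2$, $G_n$ denotes the graph with $3n-4$ vertices consisting of a path on $n$ vertices in which every vertex of the path other than its two endpoints is additionally joined to two further pendant (degree-one) vertices. Two graphs are homeomorphic if they have isomorphic subdivisions (equivalently, one can pass between them by subdividing edges and suppressing vertices of degree $2$). *)

theory Defs
  imports Main
begin

definition graph :: "'a set \<Rightarrow> 'a set set \<Rightarrow> bool" where
  "graph V E \<longleftrightarrow> finite V \<and> (\<forall>e\<in>E. \<exists>u v. e = {u, v} \<and> u \<noteq> v \<and> u \<in> V \<and> v \<in> V)"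

definition adj_rel :: "'a set set \<Rightarrow> ('a \<times> 'a) set" where
  "adj_rel E = {(u, v). {u, v} \<in> E}"

definition connected_graph :: "'a set \<Rightarrow> 'a set set \<Rightarrow> bool" where
  "connected_graph V E \<longleftrightarrow> (\<forall>u\<in>V. \<forall>v\<in>V. (u, v) \<in> (adj_rel E)\<^sup>*)"

definition has_cycle :: "'a set \<Rightarrow> 'a set set \<Rightarrow> bool" where
  "has_cycle V E \<longleftrightarrow> (\<exists>xs. length xs \<ge> 3 \<and> distinct xs \<and> set xs \<subseteq> V \<and>
      (\<forall>i < length xs - 1. {xs ! i, xs ! (i + 1)} \<in> E) \<and> {last xs, hd xs} \<in> E)"

definition tree :: "'a set \<Rightarrow> 'a set set \<Rightarrow> bool" where
  "tree V E \<longleftrightarrow> graph V E \<and> V \<noteq> {} \<and> connected_graph V E \<and> \<not> has_cycle V E"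

definition cutwidth_le2 :: "'a set \<Rightarrow> 'a set set \<Rightarrow> bool" where
  "cutwidth_le2 V E \<longleftrightarrow> (\<exists>f :: 'a \<Rightarrow> nat. bij_betw f V {1..card V} \<and>
     (\<forall>i. 1 \<le> i \<and> i < card V \<longrightarrow>
        card {e \<in> E. \<exists>u\<in>e. \<exists>v\<in>e. f u \<le> i \<and> i < f v} \<le> 2))"

definition graph_iso :: "'a set \<Rightarrow> 'a set set \<Rightarrow> 'b set \<Rightarrow> 'b set set \<Rightarrow> bool" where
  "graph_iso V E V' E' \<longleftrightarrow> (\<exists>f. bij_betw f V V' \<and>
     (\<forall>u\<in>V. \<forall>v\<in>V. {u, v} \<in> E \<longleftrightarrow> {f u, f v} \<in> E'))"

definition subgraph :: "'a set \<Rightarrow> 'a set set \<Rightarrow> 'a set \<Rightarrow> 'a set set \<Rightarrow> bool" where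
  "subgraph V' E' V E \<longleftrightarrow> graph V' E' \<and> V' \<subseteq> V \<and> E' \<subseteq> E"

definition subdiv_step :: "'a set \<Rightarrow> 'a set set \<Rightarrow> 'a set \<Rightarrow> 'a set set \<Rightarrow> bool" where
  "subdiv_step V E V' E' \<longleftrightarrow> (\<exists>u v w. {u, v} \<in> E \<and> u \<noteq> v \<and> w \<notin> V \<and>
      V' = insert w V \<and> E' = (E - {{u, v}}) \<union> {{u, w}, {w, v}})"

inductive subdivision :: "'a set \<Rightarrow> 'a set set \<Rightarrow> 'a set \<Rightarrow> 'a set set \<Rightarrow> bool" where
  refl: "subdivision V E V E"
| step: "subdivision V E V1 E1 \<Longrightarrow> subdiv_step V1 E1 V2 E2 \<Longrightarrow> subdivision V E V2 E2"

definition homeomorphic :: "'a set \<Rightarrow> 'a set set \<Rightarrow> 'a set \<Rightarrow> 'a set set \<Rightarrow> bool" where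
  "homeomorphic V1 E1 V2 E2 \<longleftrightarrow> graph V1 E1 \<and> graph V2 E2 \<and>
     (\<exists>S1 F1 S2 F2. subdivision V1 E1 S1 F1 \<and> subdivision V2 E2 S2 F2 \<and> graph_iso S1 F1 S2 F2)"

text \<open>G_n on vertex type nat: path vertex i (1..n) is 3i; its pendants (2 \<le> i \<le> n-1) are 3i+1, 3i+2.\<close>
definition GV :: "nat \<Rightarrow> nat set" where
  "GV n = {3 * i | i. 1 \<le> i \<and> i \<le> n} \<union> {3 * i + 1 | i. 2 \<le> i \<and> i + 1 \<le> n}
          \<union> {3 * i + 2 | i. 2 \<le> i \<and> i + 1 \<le> n}"

definition GE :: "nat \<Rightarrow> nat set set" where
  "GE n = {{3 * i, 3 * (i + 1)} | i. 1 \<le> i \<and> i < n}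
          \<union> {{3 * i, 3 * i + 1} | i. 2 \<le> i \<and> i + 1 \<le> n}
          \<union> {{3 * i, 3 * i + 2} | i. 2 \<le> i \<and> i + 1 \<le> n}"

end

theory Submission
  imports Defs
begin

definition cross :: "('a \<Rightarrow> nat) \<Rightarrow> 'a set set \<Rightarrow> nat \<Rightarrow> 'a set set" where
  "cross f E i = {e\<in>E. \<exists>u\<in>e. \<exists>v\<in>e. f u \<le> i \<and> i < f v}"

definition lay :: "'a set \<Rightarrow> 'a set set \<Rightarrow> ('a \<Rightarrow> nat) \<Rightarrow> bool" where
  "lay V E f \<longleftrightarrow> inj_on f V \<and> (\<forall>i. card (cross f E i) \<le> 2)"

lemma ar1: "(2 * a + 2 \<le> (j::nat)) \<longleftrightarrow> (2 \<le> j \<and> a \<le> (j - 2) div 2)" by presburger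
lemma ar2: "2*(a::nat)+3 \<le> j \<Longrightarrow> j < 2*b+2 \<Longrightarrow> a \<le> (j-2) div 2 \<and> (j-2) div 2 < b" by presburger
lemma ar3: "2*(a::nat)+3 \<noteq> 2 * b + 2" by presburger

lemma graph_sub: "graph V E \<Longrightarrow> e \<in> E \<Longrightarrow> e \<subseteq> V"
  unfolding graph_def by force
lemma graph_edge: "graph V E \<Longrightarrow> e \<in> E \<Longrightarrow> \<exists>u v. e = {u,v} \<and> u \<noteq> v \<and> u \<in> V \<and> v \<in> V"
  unfolding graph_def by (elim conjE ballE) auto
lemma graph_finE: "graph V E \<Longrightarrow> finite E"
proof -
  assume g: "graph V E"
  have "E \<subseteq> Pow V" using g graph_sub by blast
  moreover have "finite (Pow V)" using g unfolding graph_def by simp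
  ultimately show ?thesis by (rule finite_subset)
qed

lemma cw_alt: "cutwidth_le2 V E \<longleftrightarrow> (\<exists>f :: 'a \<Rightarrow> nat. bij_betw f V {1..card V} \<and>
     (\<forall>i. 1 \<le> i \<and> i < card V \<longrightarrow> card (cross f E i) \<le> 2))"
  unfolding cutwidth_le2_def cross_def by simp

lemma cw_to_lay:
  assumes g: "graph V E" and c: "cutwidth_le2 V E"
  shows "\<exists>f. lay V E f"
proof -
  obtain f where fb: "bij_betw f V {1..card V}" and
    cw: "\<forall>i. 1 \<le> i \<and> i < card V \<longrightarrow> card (cross f E i) \<le> 2"
    using c unfolding cw_alt by blast
  have "card (cross f E i) \<le> 2" for i
  proof (cases "1 \<le> i \<and> i < card V")
    case True then show ?thesis using cw by blast
  next
    case False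
    have "cross f E i = {}"
    proof (rule ccontr)
      assume "cross f E i \<noteq> {}"
      then obtain e u v where "e \<in> E" "u \<in> e" "v \<in> e" "f u \<le> i" "i < f v"
        unfolding cross_def by blast
      moreover have "u \<in> V" "v \<in> V" using graph_sub[OF g \<open>e\<in>E\<close>] \<open>u\<in>e\<close> \<open>v\<in>e\<close> by auto
      moreover have "f u \<in> {1..card V}" "f v \<in> {1..card V}" using fb \<open>u\<in>V\<close> \<open>v\<in>V\<close> unfolding bij_betw_def by auto
      ultimately show False using False by auto
    qed
    then show ?thesis by simp
  qed
  then show ?thesis using fb unfolding lay_def bij_betw_def by blast
qed

lemma lay_to_cw:
  assumes g: "graph V E" and l: "lay V E f"
  shows "cutwidth_le2 V E"
proof -
  have fin: "finite V" using g unfolding graph_def by simp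
  have inj: "inj_on f V" using l unfolding lay_def by simp
  define rk where "rk v = card {u\<in>V. f u \<le> f v}" for v
  have mono: "rk u < rk v" if "u \<in> V" "v \<in> V" "f u < f v" for u v
  proof -
    have "v \<in> {x\<in>V. f x \<le> f v}" "v \<notin> {x\<in>V. f x \<le> f u}" using that by auto
    have "{x\<in>V. f x \<le> f u} \<subset> {x\<in>V. f x \<le> f v}"
    proof (rule psubsetI)
      show "{x\<in>V. f x \<le> f u} \<subseteq> {x\<in>V. f x \<le> f v}" using that by auto
      show "{x\<in>V. f x \<le> f u} \<noteq> {x\<in>V. f x \<le> f v}" using \<open>v \<in> {x\<in>V. f x \<le> f v}\<close> \<open>v \<notin> {x\<in>V. f x \<le> f u}\<close> by blast
    qed
    moreover have "finite {x\<in>V. f x \<le> f v}" using fin by simp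
    ultimately show ?thesis unfolding rk_def by (rule psubset_card_mono[rotated])
  qed
  have monoeq: "rk u \<le> rk v \<longleftrightarrow> f u \<le> f v" if "u \<in> V" "v \<in> V" for u v
  proof
    assume "rk u \<le> rk v" then show "f u \<le> f v" using mono[OF that(2,1)] by fastforce
  next
    assume "f u \<le> f v" then show "rk u \<le> rk v" using mono[OF that] by (cases "f u = f v") (auto simp: rk_def)
  qed
  have injr: "inj_on rk V"
  proof (rule inj_onI)
    fix x y assume "x \<in> V" "y \<in> V" "rk x = rk y"
    then have "f x \<le> f y" "f y \<le> f x" using monoeq[OF \<open>x\<in>V\<close> \<open>y\<in>V\<close>] monoeq[OF \<open>y\<in>V\<close> \<open>x\<in>V\<close>] by auto
    then have "f x = f y" by simp
    then show "x = y" using inj \<open>x \<in> V\<close> \<open>y \<in> V\<close> by (meson inj_onD)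
  qed
  have rng: "rk ` V \<subseteq> {1..card V}"
  proof
    fix x assume "x \<in> rk ` V"
    then obtain v where v: "v \<in> V" "x = rk v" by auto
    have "v \<in> {u\<in>V. f u \<le> f v}" using v by simp
    then have "{u\<in>V. f u \<le> f v} \<noteq> {}" by blast
    then have "1 \<le> rk v" unfolding rk_def using fin card_gt_0_iff[of "{u\<in>V. f u \<le> f v}"] by simp
    moreover have "rk v \<le> card V" unfolding rk_def by (rule card_mono[OF fin]) auto
    ultimately show "x \<in> {1..card V}" using v by auto
  qed
  have bij: "bij_betw rk V {1..card V}"
  proof -
    have "card (rk ` V) = card V" using card_image[OF injr] .
    then have "rk ` V = {1..card V}" using rng by (intro card_subset_eq) auto
    then show ?thesis using injr unfolding bij_betw_def by simp
  qed
  have "card (cross rk E i) \<le> 2" if i: "1 \<le> i" "i < card V" for i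
  proof -
    obtain w where w: "w \<in> V" "rk w = i" using bij i unfolding bij_betw_def by (metis atLeastAtMost_iff imageE less_imp_le)
    have "cross rk E i = cross f E (f w)"
    proof -
      have "rk u \<le> i \<longleftrightarrow> f u \<le> f w" if "u \<in> V" for u using monoeq[OF that w(1)] w by simp
      then have eq1: "\<forall>e\<in>E. \<forall>u\<in>e. (rk u \<le> i \<longleftrightarrow> f u \<le> f w)"
        using graph_sub[OF g] by blast
      then have eq2: "\<forall>e\<in>E. \<forall>u\<in>e. (i < rk u \<longleftrightarrow> f w < f u)"
        by (meson not_le)
      show ?thesis unfolding cross_def
      proof (rule Collect_cong)
        fix e
        show "(e \<in> E \<and> (\<exists>u\<in>e. \<exists>v\<in>e. rk u \<le> i \<and> i < rk v)) = (e \<in> E \<and> (\<exists>u\<in>e. \<exists>v\<in>e. f u \<le> f w \<and> f w < f v))"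
          using eq1 eq2 by blast
      qed
    qed
    then show ?thesis using l unfolding lay_def by simp
  qed
  then show ?thesis using bij unfolding cw_alt by blast
qed


lemma lay_mono:
  assumes "lay V E f" "V' \<subseteq> V" "E' \<subseteq> E" "finite E"
  shows "lay V' E' f"
proof -
  have "card (cross f E' i) \<le> card (cross f E i)" for i
    by (rule card_mono) (use assms in \<open>auto simp: cross_def\<close>)
  then show ?thesis using assms unfolding lay_def by (meson inj_on_subset order_trans)
qed

lemma lay_iso:
  assumes g: "graph V E" and iso: "graph_iso V E V' E'" and l: "lay V' E' h" and fin: "finite E'"
  shows "\<exists>f. lay V E f"
proof -
  obtain b where b: "bij_betw b V V'" and ed: "\<forall>u\<in>V. \<forall>v\<in>V. {u, v} \<in> E \<longleftrightarrow> {b u, b v} \<in> E'"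
    using iso unfolding graph_iso_def by blast
  have injb: "inj_on b V" using b by (simp add: bij_betw_def)
  have "inj_on (h \<circ> b) V"
    using l b unfolding lay_def bij_betw_def by (simp add: comp_inj_on)
  moreover have "card (cross (h \<circ> b) E i) \<le> 2" for i
  proof -
    have "card (cross (h \<circ> b) E i) \<le> card (cross h E' i)"
    proof (rule card_inj_on_le[where f="image b"])
      show "inj_on (image b) (cross (h \<circ> b) E i)"
      proof (rule inj_onI)
        fix x y assume "x \<in> cross (h \<circ> b) E i" "y \<in> cross (h \<circ> b) E i" "b ` x = b ` y"
        then have "x \<subseteq> V" "y \<subseteq> V" using graph_sub[OF g] unfolding cross_def by auto
        then show "x = y" using \<open>b ` x = b ` y\<close> injb by (simp add: inj_on_image_eq_iff)
      qed
      show "image b ` cross (h \<circ> b) E i \<subseteq> cross h E' i"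
      proof
        fix y assume "y \<in> image b ` cross (h \<circ> b) E i"
        then obtain e where e: "e \<in> cross (h \<circ> b) E i" "y = b ` e" by blast
        then have eE: "e \<in> E" unfolding cross_def by simp
        then obtain u v where uv: "e = {u,v}" "u \<in> V" "v \<in> V" using graph_edge[OF g] by blast
        then have "y \<in> E'" using ed eE e by auto
        then show "y \<in> cross h E' i" using e unfolding cross_def by auto
      qed
      show "finite (cross h E' i)" using fin unfolding cross_def by simp
    qed
    then show ?thesis using l unfolding lay_def by (meson order_trans)
  qed
  ultimately show ?thesis unfolding lay_def by blast
qed

lemma graph_subdiv:
  assumes "subdivision V E V2 E2" "graph V E"
  shows "graph V2 E2"
  using assms
proof (induction rule: subdivision.induct)
  case (refl V E) then show ?case by simp
next
  case (step V E V1 E1 V2 E2)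
  then have g1: "graph V1 E1" by simp
  obtain u v w where s: "{u, v} \<in> E1" "u \<noteq> v" "w \<notin> V1" "V2 = insert w V1"
    "E2 = (E1 - {{u, v}}) \<union> {{u, w}, {w, v}}" using step(2) unfolding subdiv_step_def by blast
  have "u \<in> V1" "v \<in> V1" using graph_sub[OF g1 s(1)] by auto
  then show ?case using g1 s unfolding graph_def by auto
qed

lemma cross_pair: "{a, b} \<in> cross h X j \<longleftrightarrow> {a, b} \<in> X \<and> ((h a \<le> j \<and> j < h b) \<or> (h b \<le> j \<and> j < h a))"
  unfolding cross_def by auto

lemma lay_step_aux:
  assumes g: "graph V E" and l: "lay V E f" and uv: "{u, v} \<in> E" "u \<noteq> v" and w: "w \<notin> V"
    and lt: "f u < f v"
  shows "\<exists>f'. lay (insert w V) ((E - {{u, v}}) \<union> {{u, w}, {w, v}}) f'"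
proof -
  define E' where "E' = (E - {{u, v}}) \<union> {{u, w}, {w, v}}"
  define f' where "f' x = (if x = w then 2 * f u + 3 else 2 * f x + 2)" for x
  have finE: "finite E" using graph_finE[OF g] .
  have uV: "u \<in> V" "v \<in> V" using graph_sub[OF g uv(1)] by auto
  have uw: "u \<noteq> w" "v \<noteq> w" using uV w by auto
  have f'w: "f' w = 2 * f u + 3" unfolding f'_def by simp
  have f'o: "x \<noteq> w \<Longrightarrow> f' x = 2 * f x + 2" for x unfolding f'_def by simp
  have injf: "inj_on f V" using l unfolding lay_def by simp
  have inj': "inj_on f' (insert w V)"
  proof (rule inj_onI)
    fix x y assume xy: "x \<in> insert w V" "y \<in> insert w V" "f' x = f' y"
    show "x = y"
    proof (cases "x = w")
      case True
      show ?thesis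
      proof (rule ccontr)
        assume "x \<noteq> y"
        then have "f' y = 2 * f y + 2" using True f'o by simp
        then show False using xy(3) True f'w ar3 by metis
      qed
    next
      case False
      show ?thesis
      proof (cases "y = w")
        case True
        then have "f' x = 2 * f x + 2" using False f'o by simp
        then show ?thesis using xy(3) True f'w ar3 by metis
      next
        case False2: False
        then have "f x = f y" using xy(3) f'o False by simp
        then show ?thesis using injf xy False False2 by (auto dest: inj_onD)
      qed
    qed
  qed
  have wE: "w \<notin> e" if "e \<in> E" for e using graph_sub[OF g that] w by auto
  have "card (cross f' E' j) \<le> 2" for j
  proof -
    define j' where "j' = (j - 2) div 2"
    have key: "x \<noteq> w \<Longrightarrow> (f' x \<le> j \<longleftrightarrow> (2 \<le> j \<and> f x \<le> j'))" for x
    proof -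
      assume "x \<noteq> w"
      then have "f' x = 2 * f x + 2" by (rule f'o)
      then show ?thesis unfolding j'_def using ar1[of "f x" j] by simp
    qed
    have cr_old: "e \<in> cross f E j'" if eE: "e \<in> E" and ec: "e \<in> cross f' E' j" for e
    proof -
      obtain a b where ab: "a \<in> e" "b \<in> e" "f' a \<le> j" "j < f' b"
        using ec unfolding cross_def by blast
      have "a \<noteq> w" "b \<noteq> w" using wE[OF eE] ab by auto
      then have ka: "f' a \<le> j \<longleftrightarrow> (2 \<le> j \<and> f a \<le> j')" and kb: "f' b \<le> j \<longleftrightarrow> (2 \<le> j \<and> f b \<le> j')"
        using key by auto
      have "f a \<le> j'" "\<not> f b \<le> j'" using ka kb ab(3,4) by auto
      then have "f a \<le> j'" "j' < f b" by auto
      then show ?thesis using ab(1,2) eE unfolding cross_def by blast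
    qed
    have cr_uw: "j = 2 * f u + 2" if "{u, w} \<in> cross f' E' j"
      using that f'w f'o[OF uw(1)] unfolding cross_pair by auto
    have cr_wv: "2 * f u + 3 \<le> j \<and> j < 2 * f v + 2" if "{w, v} \<in> cross f' E' j"
      using that f'w f'o[OF uw(2)] lt unfolding cross_pair by auto
    have uvc: "{u, v} \<in> cross f E j'" if "f u \<le> j'" "j' < f v"
      using that uv(1) unfolding cross_pair by auto
    define \<phi> where "\<phi> e = (if w \<in> e then {u, v} else e)" for e
    have Ecases: "e \<in> E \<or> e = {u, w} \<or> e = {w, v}" if "e \<in> E'" for e
      using that unfolding E'_def by blast
    have "card (cross f' E' j) \<le> card (cross f E j')"
    proof (rule card_inj_on_le[where f = \<phi>])
      show "finite (cross f E j')" using finE unfolding cross_def by simp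
      show "\<phi> ` cross f' E' j \<subseteq> cross f E j'"
      proof
        fix y assume "y \<in> \<phi> ` cross f' E' j"
        then obtain e where e: "e \<in> cross f' E' j" "y = \<phi> e" by blast
        have eE': "e \<in> E'" using e(1) unfolding cross_def by simp
        consider "e \<in> E" | "e = {u, w}" | "e = {w, v}" using Ecases[OF eE'] by blast
        then show "y \<in> cross f E j'"
        proof cases
          case 1 then show ?thesis using e cr_old wE unfolding \<phi>_def by auto
        next
          case 2
          then have "j = 2 * f u + 2" using cr_uw e by simp
          then have "j' = f u" unfolding j'_def by simp
          then have "{u, v} \<in> cross f E j'" using uvc lt by simp
          then show ?thesis using e 2 unfolding \<phi>_def by simp
        next
          case 3
          then have "2 * f u + 3 \<le> j \<and> j < 2 * f v + 2" using cr_wv e by simp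
          then have "f u \<le> j' \<and> j' < f v" unfolding j'_def using ar2 by blast
          then have "{u, v} \<in> cross f E j'" using uvc by simp
          then show ?thesis using e 3 unfolding \<phi>_def by simp
        qed
      qed
      show "inj_on \<phi> (cross f' E' j)"
      proof (rule inj_onI)
        fix x y assume x: "x \<in> cross f' E' j" and y: "y \<in> cross f' E' j" and xy: "\<phi> x = \<phi> y"
        have xE: "x \<in> E'" and yE: "y \<in> E'" using x y unfolding cross_def by auto
        have uvE': "{u, v} \<notin> E'" unfolding E'_def using uw uv(2) by (auto simp: doubleton_eq_iff)
        have c1: "e = {u, w} \<or> e = {w, v}" if "e \<in> E'" "w \<in> e" for e
          using Ecases[OF that(1)] wE that(2) by blast
        show "x = y"
        proof (cases "w \<in> x")
          case True
          note xw = True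
          show ?thesis
          proof (cases "w \<in> y")
            case True
            have "x = {u, w} \<or> x = {w, v}" "y = {u, w} \<or> y = {w, v}" using c1 xE yE xw True by auto
            moreover have "\<not> ({u, w} \<in> cross f' E' j \<and> {w, v} \<in> cross f' E' j)"
              using cr_uw cr_wv by auto
            ultimately show ?thesis using x y by auto
          next
            case False
            then have "y = {u, v}" using xy xw unfolding \<phi>_def by simp
            then show ?thesis using yE uvE' by simp
          qed
        next
          case False
          note xw = False
          show ?thesis
          proof (cases "w \<in> y")
            case True
            then have "x = {u, v}" using xy xw unfolding \<phi>_def by simp
            then show ?thesis using xE uvE' by simp
          next
            case False then show ?thesis using xy xw unfolding \<phi>_def by simp
          qed
        qed
      qed
    qed
    then show ?thesis using l unfolding lay_def by (meson order_trans)
  qed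
  then show ?thesis using inj' unfolding lay_def E'_def by blast
qed

lemma lay_step:
  assumes g: "graph V E" and l: "lay V E f" and s: "subdiv_step V E V' E'"
  shows "\<exists>f'. lay V' E' f'"
proof -
  obtain u v w where uv: "{u, v} \<in> E" "u \<noteq> v" "w \<notin> V" "V' = insert w V"
    "E' = (E - {{u, v}}) \<union> {{u, w}, {w, v}}" using s unfolding subdiv_step_def by blast
  have "u \<in> V" "v \<in> V" using graph_sub[OF g uv(1)] by auto
  then have "f u \<noteq> f v" using l uv(2) unfolding lay_def by (meson inj_on_eq_iff)
  then show ?thesis
  proof (cases "f u < f v")
    case True then show ?thesis using lay_step_aux[OF g l uv(1,2,3)] uv by simp
  next
    case False
    then have "f v < f u" using \<open>f u \<noteq> f v\<close> by simp
    moreover have "{v, u} \<in> E" using uv(1) by (simp add: insert_commute)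
    ultimately obtain f' where "lay (insert w V) ((E - {{v, u}}) \<union> {{v, w}, {w, u}}) f'"
      using lay_step_aux[OF g l _ _ uv(3)] uv(2) by metis
    moreover have "(E - {{v, u}}) \<union> {{v, w}, {w, u}} = E'" using uv by (auto simp: insert_commute)
    ultimately show ?thesis using uv by auto
  qed
qed

lemma lay_subdiv:
  assumes "subdivision V E V2 E2" "graph V E" "lay V E f"
  shows "\<exists>f. lay V2 E2 f"
  using assms
proof (induction arbitrary: f rule: subdivision.induct)
  case (refl V E) then show ?case by blast
next
  case (step V E V1 E1 V2 E2)
  then obtain f1 where "lay V1 E1 f1" by blast
  moreover have "graph V1 E1" using graph_subdiv step by blast
  ultimately show ?case using lay_step step by blast
qed

lemma lay_unstep:
  assumes g1: "graph V1 E1" and s: "subdiv_step V1 E1 V2 E2" and l: "lay V2 E2 f"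
  shows "lay V1 E1 f"
proof -
  obtain u v w where uv: "{u, v} \<in> E1" "u \<noteq> v" "w \<notin> V1" "V2 = insert w V1"
    "E2 = (E1 - {{u, v}}) \<union> {{u, w}, {w, v}}" using s unfolding subdiv_step_def by blast
  have finE2: "finite E2" using graph_finE[OF g1] uv by simp
  have wE: "w \<notin> e" if "e \<in> E1" for e using graph_sub[OF g1 that] uv by auto
  have "card (cross f E1 j) \<le> 2" for j
  proof -
    define \<phi> where "\<phi> e = (if e = {u, v} then (if {u, w} \<in> cross f E2 j then {u, w} else {w, v}) else e)" for e
    have "card (cross f E1 j) \<le> card (cross f E2 j)"
    proof (rule card_inj_on_le[where f = \<phi>])
      show "finite (cross f E2 j)" using finE2 unfolding cross_def by simp
      show "\<phi> ` cross f E1 j \<subseteq> cross f E2 j"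
      proof
        fix y assume "y \<in> \<phi> ` cross f E1 j"
        then obtain e where e: "e \<in> cross f E1 j" "y = \<phi> e" by blast
        show "y \<in> cross f E2 j"
        proof (cases "e = {u, v}")
          case True
          then obtain a b where ab: "a \<in> {u,v}" "b \<in> {u,v}" "f a \<le> j" "j < f b"
            using e unfolding cross_def by blast
          have "{u, w} \<in> cross f E2 j \<or> {w, v} \<in> cross f E2 j"
          proof (cases "f w \<le> j")
            case True then show ?thesis using ab uv unfolding cross_def by auto
          next
            case False then show ?thesis using ab uv unfolding cross_def by auto
          qed
          then show ?thesis using e True unfolding \<phi>_def by auto
        next
          case False then show ?thesis using e uv unfolding \<phi>_def cross_def by auto
        qed
      qed
      show "inj_on \<phi> (cross f E1 j)"
      proof (rule inj_onI)
        fix x y assume x: "x \<in> cross f E1 j" and y: "y \<in> cross f E1 j" and xy: "\<phi> x = \<phi> y"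
        have "x \<in> E1" "y \<in> E1" using x y unfolding cross_def by auto
        then have "w \<notin> x" "w \<notin> y" using wE by auto
        then show "x = y" using xy unfolding \<phi>_def by (auto split: if_splits)
      qed
    qed
    then show ?thesis using l unfolding lay_def by (meson order_trans)
  qed
  moreover have "inj_on f V1" using l uv unfolding lay_def by auto
  ultimately show ?thesis unfolding lay_def by blast
qed

lemma lay_unsubdiv:
  assumes "subdivision V E V2 E2" "graph V E" "lay V2 E2 f"
  shows "lay V E f"
  using assms
proof (induction rule: subdivision.induct)
  case (refl V E) then show ?case by blast
next
  case (step V E V1 E1 V2 E2)
  have "graph V1 E1" using graph_subdiv step by blast
  then have "lay V1 E1 f" using lay_unstep step by blast
  then show ?case using step by blast
qed


definition fG :: "nat \<Rightarrow> nat" where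
  "fG x = (if x mod 3 = 0 then x else if x mod 3 = 1 then x - 2 else x - 1)"

definition hG :: "nat \<Rightarrow> nat" where
  "hG z = (if z mod 3 = 0 then z else if z mod 3 = 2 then z + 2 else z + 1)"

lemma dm3: "(a::nat) < 3 \<Longrightarrow> (3 * m + a) div 3 = m \<and> (3 * m + a) mod 3 = a"
proof -
  assume a: "a < 3"
  have e: "3 * m + a = a + m * 3" by simp
  have "(a + m * 3) mod 3 = a mod 3" by (rule mod_mult_self1)
  then have "(3 * m + a) mod 3 = a" using a e by simp
  moreover have "(a + m * 3) div 3 = m + a div 3" by (rule div_mult_self1) simp
  then have "(3 * m + a) div 3 = m" using a e by simp
  ultimately show ?thesis by simp
qed

lemma m3cases: "(x::nat) mod 3 = 0 \<or> x mod 3 = 1 \<or> x mod 3 = 2"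
  using mod_less_divisor[of 3 x] by linarith
lemma m3e: "(3 * e + 2) mod 3 = (2::nat)"
proof -
  have "(2 + e * 3) mod 3 = 2 mod (3::nat)" by (rule mod_mult_self1)
  moreover have "2 + e * 3 = 3 * e + (2::nat)" by simp
  ultimately show ?thesis by (simp only:) simp
qed
lemma m3e1: "(3 * e + 1) mod 3 = (1::nat)"
proof -
  have "(1 + e * 3) mod 3 = 1 mod (3::nat)" by (rule mod_mult_self1)
  moreover have "1 + e * 3 = 3 * e + (1::nat)" by simp
  ultimately show ?thesis by (simp only:) simp
qed
lemma m3g: "(3 * e + 2) div 3 = (e::nat)"
proof -
  have "(3 * e + 2) div 3 * 3 + (3 * e + 2) mod 3 = 3 * e + (2::nat)" by (rule div_mult_mod_eq)
  then show ?thesis using m3e[of e] by simp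
qed
lemma m3a: "3 \<le> (x::nat) \<Longrightarrow> x mod 3 = 1 \<Longrightarrow> (x - 2) mod 3 = 2"
proof -
  assume a: "3 \<le> x" "x mod 3 = 1"
  have "x div 3 * 3 + x mod 3 = x" by (rule div_mult_mod_eq)
  then have x: "x = x div 3 * 3 + 1" using a by simp
  then obtain e where "x div 3 = Suc e" using a by (cases "x div 3") auto
  then have "x - 2 = 3 * e + 2" using x by simp
  then show ?thesis using m3e by simp
qed
lemma m3b: "3 \<le> (x::nat) \<Longrightarrow> x mod 3 = 2 \<Longrightarrow> (x - 1) mod 3 = 1"
proof -
  assume a: "3 \<le> x" "x mod 3 = 2"
  have "x div 3 * 3 + x mod 3 = x" by (rule div_mult_mod_eq)
  then have x: "x = x div 3 * 3 + 2" using a by simp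
  then have "x - 1 = 3 * (x div 3) + 1" by simp
  then show ?thesis using m3e1 by simp
qed
lemma m3c: "(j::nat) = 3 * i - 1 \<Longrightarrow> 1 \<le> i \<Longrightarrow> j mod 3 = 2"
proof -
  assume a: "j = 3 * i - 1" "1 \<le> i"
  then obtain e where "i = Suc e" by (cases i) auto
  then have "j = 3 * e + 2" using a by simp
  then show ?thesis using m3e by simp
qed
lemma m3d: "(j::nat) = 3 * i - 1 \<Longrightarrow> 1 \<le> i \<Longrightarrow> i = j div 3 + 1"
proof -
  assume a: "j = 3 * i - 1" "1 \<le> i"
  then obtain e where "i = Suc e" by (cases i) auto
  then have "j = 3 * e + 2" using a by simp
  then show ?thesis using m3g \<open>i = Suc e\<close> by simp
qed

lemma hG_fG: "3 \<le> x \<Longrightarrow> hG (fG x) = x"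
proof -
  assume x: "3 \<le> x"
  consider "x mod 3 = 0" | "x mod 3 = 1" | "x mod 3 = 2" using m3cases[of x] by (elim disjE) simp_all
  then show ?thesis
  proof cases
    case 1 then show ?thesis unfolding fG_def hG_def by simp
  next
    case 2
    then have "fG x = x - 2" unfolding fG_def by simp
    moreover have "(x - 2) mod 3 = 2" using m3a[OF x 2] .
    ultimately show ?thesis unfolding hG_def using x by simp
  next
    case 3
    then have "fG x = x - 1" unfolding fG_def by simp
    moreover have "(x - 1) mod 3 = 1" using m3b[OF x 3] .
    ultimately show ?thesis unfolding hG_def using x by simp
  qed
qed

lemma fG_inj_aux: "3 \<le> x \<Longrightarrow> 3 \<le> y \<Longrightarrow> fG x = fG y \<Longrightarrow> x = y"
  by (metis hG_fG)

lemma GV_ge3: "x \<in> GV n \<Longrightarrow> 3 \<le> x"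
  unfolding GV_def by auto

lemma fG0: "fG (3 * i) = 3 * i" unfolding fG_def by simp
lemma fG1: "fG (3 * i + 1) = 3 * i - 1"
proof -
  have "(3 * i + 1) mod 3 = 1" by (rule m3e1)
  then show ?thesis unfolding fG_def by simp
qed
lemma fG2: "fG (3 * i + 2) = 3 * i + 1"
proof -
  have "(3 * i + 2) mod 3 = 2" by (rule m3e)
  then show ?thesis unfolding fG_def by simp
qed
lemma fG3: "fG (3 * (i + 1)) = 3 * i + 3" unfolding fG_def by simp

lemma GE_cases:
  assumes "e \<in> GE n"
  obtains (s) i where "e = {3 * i, 3 * (i + 1)}" "1 \<le> i" "i < n"
    | (p1) i where "e = {3 * i, 3 * i + 1}" "2 \<le> i" "i + 1 \<le> n"
    | (p2) i where "e = {3 * i, 3 * i + 2}" "2 \<le> i" "i + 1 \<le> n"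
  using assms unfolding GE_def by blast

lemma lay_G: "lay (GV n) (GE n) fG"
proof -
  have inj: "inj_on fG (GV n)"
    by (rule inj_onI) (use fG_inj_aux GV_ge3 in blast)
  have "card (cross fG (GE n) j) \<le> 2" for j
  proof -
    define a where "a = j div 3"
    define X where "X = (if j mod 3 = 2 then {3*(a+1), 3*(a+1)+1} else {3*a, 3*a+2})"
    have sub: "cross fG (GE n) j \<subseteq> {{3*a, 3*(a+1)}, X}"
    proof
      fix e assume e: "e \<in> cross fG (GE n) j"
      then obtain x y where xy: "x \<in> e" "y \<in> e" "fG x \<le> j" "j < fG y" and eG: "e \<in> GE n"
        unfolding cross_def by blast
      from eG show "e \<in> {{3*a, 3*(a+1)}, X}"
      proof (cases rule: GE_cases)
        case (s i)
        then have "3 * i \<le> j \<and> j < 3 * i + 3" using xy fG0[of i] fG3[of i] by auto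
        then have "i = a" unfolding a_def by linarith
        then show ?thesis using s by simp
      next
        case (p1 i)
        then have "3 * i - 1 \<le> j \<and> j < 3 * i" using xy fG0[of i] fG1[of i] by auto
        then have "j = 3 * i - 1" by linarith
        have i1: "1 \<le> i" using p1 by simp
        have "j mod 3 = 2" using m3c[OF \<open>j = 3 * i - 1\<close> i1] .
        have "i = a + 1" unfolding a_def using m3d[OF \<open>j = 3 * i - 1\<close> i1] .
        note this \<open>j mod 3 = 2\<close>
        then show ?thesis using p1 unfolding X_def by simp
      next
        case (p2 i)
        then have "3 * i \<le> j \<and> j < 3 * i + 1" using xy fG0[of i] fG2[of i] by auto
        then have "j = 3 * i" by simp
        then have "j mod 3 = 0" "i = a" unfolding a_def by simp_all
        then show ?thesis using p2 unfolding X_def by simp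
      qed
    qed
    have "card {{3*a, 3*(a+1)}, X} \<le> 2" by (simp add: card_insert_if)
    moreover have "finite {{3*a, 3*(a+1)}, X}" by simp
    ultimately show ?thesis using card_mono[OF _ sub] by linarith
  qed
  then show ?thesis using inj unfolding lay_def by blast
qed

lemma graph_G: "graph (GV n) (GE n)"
proof -
  have "GV n \<subseteq> {..3*n+2}" unfolding GV_def by auto
  then have "finite (GV n)" using finite_subset by blast
  moreover have "\<exists>u v. e = {u, v} \<and> u \<noteq> v \<and> u \<in> GV n \<and> v \<in> GV n" if "e \<in> GE n" for e
    using that
  proof (cases rule: GE_cases)
    case (s i)
    have m1a: "3 * i \<in> GV n" unfolding GV_def by (rule UnI1, rule UnI1, use s in auto)
    have "3 * (i + 1) \<in> {3 * k | k. 1 \<le> k \<and> k \<le> n}"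
      by (rule CollectI, rule exI[of _ "i+1"]) (use s in simp)
    then have m1b: "3 * (i + 1) \<in> GV n" unfolding GV_def by (rule UnI1[OF UnI1])
    note m1 = m1a m1b
    show ?thesis by (rule exI[of _ "3*i"], rule exI[of _ "3*(i+1)"]) (use s m1 in simp)
  next
    case (p1 i)
    have "3 * i \<in> GV n" unfolding GV_def by (rule UnI1, rule UnI1, use p1 in auto)
    have "3 * i + 1 \<in> GV n" unfolding GV_def by (rule UnI1, rule UnI2, use p1 in auto)
    show ?thesis by (rule exI[of _ "3*i"], rule exI[of _ "3*i+1"]) (use p1 \<open>3 * i \<in> GV n\<close> \<open>3 * i + 1 \<in> GV n\<close> in simp)
  next
    case (p2 i)
    have "3 * i \<in> GV n" unfolding GV_def by (rule UnI1, rule UnI1, use p2 in auto)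
    have "3 * i + 2 \<in> GV n" unfolding GV_def by (rule UnI2, use p2 in auto)
    show ?thesis by (rule exI[of _ "3*i"], rule exI[of _ "3*i+2"]) (use p2 \<open>3 * i \<in> GV n\<close> \<open>3 * i + 2 \<in> GV n\<close> in simp)
  qed
  ultimately show ?thesis unfolding graph_def by blast
qed


lemma cross_step:
  fixes h :: "nat \<Rightarrow> nat"
  assumes "h s \<le> i" "i < h t" "s \<le> t"
  shows "\<exists>k. s \<le> k \<and> k < t \<and> h k \<le> i \<and> i < h (Suc k)"
  using assms
proof (induction t)
  case 0 then show ?case by simp
next
  case (Suc t)
  show ?case
  proof (cases "h t \<le> i")
    case True
    have "s \<le> t"
    proof (rule ccontr)
      assume "\<not> s \<le> t"
      then have "s = Suc t" using Suc.prems(3) by simp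
      then show False using Suc.prems(1,2) by simp
    qed
    then show ?thesis using True Suc.prems(2) by auto
  next
    case False
    have "s \<noteq> Suc t" using Suc.prems(1) False Suc.prems(2) by auto
    then have "s \<le> t" using Suc.prems(3) by simp
    then obtain k where "s \<le> k \<and> k < t \<and> h k \<le> i \<and> i < h (Suc k)"
      using Suc.IH[OF Suc.prems(1)] False by auto
    then show ?thesis by (intro exI[of _ k]) simp
  qed
qed

lemma strict_chain:
  fixes h :: "nat \<Rightarrow> nat"
  assumes "\<forall>i<s. h i < h (Suc i)" "i < j" "j \<le> s"
  shows "h i < h j"
  using assms
proof (induction j)
  case 0 then show ?case by simp
next
  case (Suc j)
  have hj: "h j < h (Suc j)" using Suc.prems by simp
  show ?case
  proof (cases "i < j")
    case True
    then have "h i < h j" using Suc by simp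
    then show ?thesis using hj by simp
  next
    case False
    then have "i = j" using Suc.prems(2) by simp
    then show ?thesis using hj by simp
  qed
qed

lemma walk_exists:
  assumes "(a, b) \<in> (adj_rel E)\<^sup>*"
  shows "\<exists>q s. q 0 = a \<and> q s = b \<and> (\<forall>i<s. {q i, q (Suc i)} \<in> E)"
  using assms
proof (induction rule: rtrancl_induct)
  case base
  show ?case by (rule exI[of _ "\<lambda>_. a"], rule exI[of _ 0]) simp
next
  case (step b c)
  then obtain q s where q: "q 0 = a" "q s = b" "\<forall>i<s. {q i, q (Suc i)} \<in> E" by blast
  have bc: "{b, c} \<in> E" using step(2) unfolding adj_rel_def by simp
  define q' where "q' = q(Suc s := c)"
  have "q' 0 = a" "q' (Suc s) = c" using q unfolding q'_def by auto
  moreover have "\<forall>i<Suc s. {q' i, q' (Suc i)} \<in> E"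
  proof (intro allI impI)
    fix i assume "i < Suc s"
    then show "{q' i, q' (Suc i)} \<in> E" using q bc unfolding q'_def
      by (cases "i = s") auto
  qed
  ultimately show ?case by blast
qed

lemma shortest_walk:
  assumes "(a, b) \<in> (adj_rel E)\<^sup>*"
  shows "\<exists>q s. q 0 = a \<and> q s = b \<and> (\<forall>i<s. {q i, q (Suc i)} \<in> E) \<and> inj_on q {..s}"
proof -
  define W where "W s \<longleftrightarrow> (\<exists>q. q 0 = a \<and> q s = b \<and> (\<forall>i<s. {q i, q (Suc i)} \<in> E))" for s
  have ex: "\<exists>s. W s" using walk_exists[OF assms] unfolding W_def by blast
  define s where "s = (LEAST s. W s)"
  have Ws: "W s" unfolding s_def using ex by (rule LeastI_ex)
  have minimal: "\<not> W s'" if "s' < s" for s' using that unfolding s_def by (rule not_less_Least)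
  obtain q where q: "q 0 = a" "q s = b" "\<forall>i<s. {q i, q (Suc i)} \<in> E" using Ws unfolding W_def by blast
  have "inj_on q {..s}"
  proof (rule ccontr)
    assume "\<not> inj_on q {..s}"
    then obtain x y where xy: "x \<le> s" "y \<le> s" "q x = q y" "x \<noteq> y"
      unfolding inj_on_def by auto
    obtain i j where ij: "i < j" "j \<le> s" "q i = q j"
    proof (cases "x < y")
      case True then show ?thesis using that xy by blast
    next
      case False then have "y < x" using xy(4) by simp
      then show ?thesis using that xy by (metis)
    qed
    define d where "d = j - i"
    define q' where "q' l = (if l \<le> i then q l else q (l + d))" for l
    define s' where "s' = s - d"
    have "s' < s" using ij unfolding s'_def d_def by simp
    moreover have "W s'" unfolding W_def
    proof (intro exI conjI allI impI)
      show "q' 0 = a" using q unfolding q'_def by simp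
      show "q' s' = b"
      proof (cases "s' \<le> i")
        case True
        then have "j = s" using ij unfolding s'_def d_def by simp
        then have "s' = i" using ij unfolding s'_def d_def by simp
        then show ?thesis using True ij q \<open>j = s\<close> unfolding q'_def by simp
      next
        case False
        then have "s' + d = s" using ij unfolding s'_def d_def by simp
        then show ?thesis using False q unfolding q'_def by simp
      qed
      fix l assume l: "l < s'"
      show "{q' l, q' (Suc l)} \<in> E"
      proof (cases "l < i")
        case True then show ?thesis using q l unfolding q'_def s'_def by auto
      next
        case False
        show ?thesis
        proof (cases "l = i")
          case True
          then have "{q' l, q' (Suc l)} = {q j, q (Suc j)}" using ij unfolding q'_def d_def by auto
          moreover have "j < s" using l True ij unfolding s'_def d_def by simp
          ultimately show ?thesis using q by simp
        next
          case False
          then have "{q' l, q' (Suc l)} = {q (l + d), q (Suc (l + d))}" using \<open>\<not> l < i\<close> unfolding q'_def by auto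
          moreover have "l + d < s" using l ij unfolding s'_def d_def by simp
          ultimately show ?thesis using q by simp
        qed
      qed
    qed
    ultimately show False using minimal by blast
  qed
  then show ?thesis using q by blast
qed

lemma card3:
  assumes "finite A" "card A \<le> 2" "x \<in> A" "y \<in> A" "z \<in> A" "x \<noteq> y" "x \<noteq> z" "y \<noteq> z"
  shows False
proof -
  have "card {x, y, z} \<le> card A" using assms by (intro card_mono) auto
  moreover have "card {x, y, z} = 3" using assms by simp
  ultimately show False using assms by simp
qed

lemma spine_exists:
  assumes t: "tree V E" and fb: "bij_betw f V {1..card V}" and cw: "\<forall>i. card (cross f E i) \<le> 2"
  shows "\<exists>p r. (\<forall>i\<le>r. p i \<in> V) \<and> (\<forall>i<r. {p i, p (Suc i)} \<in> E) \<and>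
     (\<forall>i<r. f (p i) < f (p (Suc i))) \<and> f (p 0) = 1 \<and> f (p r) = card V"
proof -
  have g: "graph V E" and ne: "V \<noteq> {}" and conn: "connected_graph V E" using t unfolding tree_def by auto
  have fin: "finite V" using g unfolding graph_def by simp
  then have m1: "1 \<le> card V" using ne by (simp add: Suc_leI card_gt_0_iff)
  have img: "f ` V = {1..card V}" using fb unfolding bij_betw_def by simp
  have "1 \<in> f ` V" using img m1 by simp
  then obtain a where a: "a \<in> V" "f a = 1" by auto
  have "card V \<in> f ` V" using img m1 by simp
  then obtain b where b: "b \<in> V" "f b = card V" by auto
  have "(a, b) \<in> (adj_rel E)\<^sup>*" using conn a b unfolding connected_graph_def by blast
  from shortest_walk[OF this] obtain q s where q: "q 0 = a" "q s = b" "\<forall>i<s. {q i, q (Suc i)} \<in> E" and inj: "inj_on q {..s}"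
    by blast
  have qV: "\<forall>i\<le>s. q i \<in> V"
  proof (intro allI impI)
    fix i assume "i \<le> s"
    show "q i \<in> V"
    proof (cases "i < s")
      case True
      then have "{q i, q (Suc i)} \<in> E" using q(3) by simp
      then have "{q i, q (Suc i)} \<subseteq> V" by (rule graph_sub[OF g])
      then show ?thesis by simp
    next
      case False then have "i = s" using \<open>i \<le> s\<close> by simp
      then show ?thesis using q b by simp
    qed
  qed
  have finj: "inj_on f V" using fb unfolding bij_betw_def by simp
  have frng: "\<And>x. x \<in> V \<Longrightarrow> 1 \<le> f x \<and> f x \<le> card V" using img by auto
  have qi: "q x = q y \<Longrightarrow> x \<le> s \<Longrightarrow> y \<le> s \<Longrightarrow> x = y" for x y using inj by (simp add: inj_on_def)
  have mono: "f (q j) < f (q (Suc j))" if j: "j < s" for j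
  proof (rule ccontr)
    assume "\<not> f (q j) < f (q (Suc j))"
    moreover have "q j \<noteq> q (Suc j)" using qi[of j "Suc j"] j by auto
    then have "f (q j) \<noteq> f (q (Suc j))" using finj qV j inj_onD[OF finj] by auto
    ultimately have lt: "f (q (Suc j)) < f (q j)" by simp
    define i where "i = f (q (Suc j))"
    define h where "h = f \<circ> q"
    have e1: "{q j, q (Suc j)} \<in> cross f E i" using q(3) j lt unfolding cross_def i_def by auto
    have "h 0 \<le> i" unfolding h_def i_def using q a frng qV j by simp
    moreover have "i < h j" unfolding h_def i_def using lt by simp
    ultimately obtain k where k: "k < j" "h k \<le> i" "i < h (Suc k)" using cross_step[of h 0 i j] by auto
    have e2: "{q k, q (Suc k)} \<in> cross f E i" using q(3) k j unfolding cross_def h_def by auto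
    have "h (Suc j) \<le> i" unfolding h_def i_def by simp
    moreover have "f (q j) \<le> card V" using frng qV j by simp
    then have "i < h s" unfolding h_def i_def using q b lt by simp
    ultimately obtain k' where k': "Suc j \<le> k'" "k' < s" "h k' \<le> i" "i < h (Suc k')"
      using cross_step[of h "Suc j" i s] j by auto
    have e3: "{q k', q (Suc k')} \<in> cross f E i" using q(3) k' unfolding cross_def h_def by auto
    have d12: "{q k, q (Suc k)} \<noteq> {q j, q (Suc j)}"
    proof
      assume "{q k, q (Suc k)} = {q j, q (Suc j)}"
      then have "q k = q j \<or> q k = q (Suc j)" by auto
      then show False using qi[of k j] qi[of k "Suc j"] k j by auto
    qed
    have d13: "{q k, q (Suc k)} \<noteq> {q k', q (Suc k')}"
    proof
      assume "{q k, q (Suc k)} = {q k', q (Suc k')}"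
      then have "q k = q k' \<or> q k = q (Suc k')" by auto
      then show False using qi[of k k'] qi[of k "Suc k'"] k k' j by auto
    qed
    have d23: "{q j, q (Suc j)} \<noteq> {q k', q (Suc k')}"
    proof
      assume "{q j, q (Suc j)} = {q k', q (Suc k')}"
      then have "q j = q k' \<or> q j = q (Suc k')" by auto
      then show False using qi[of j k'] qi[of j "Suc k'"] k' j by auto
    qed
    have "finite (cross f E i)" using graph_finE[OF g] unfolding cross_def by simp
    then show False using card3[OF _ _ e2 e1 e3 d12 d13 d23] cw by blast
  qed
  show ?thesis
    by (rule exI[of _ q], rule exI[of _ s]) (use qV q mono a b in auto)
qed


lemma embed:
  assumes g: "graph V E" and inj: "inj_on h V" and hv: "h ` V \<subseteq> HV"
    and he: "\<And>u v. {u, v} \<in> E \<Longrightarrow> {h u, h v} \<in> HE"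
  shows "\<exists>V' E'. subgraph V' E' HV HE \<and> graph_iso V E V' E'"
proof (intro exI conjI)
  define E' where "E' = image h ` E"
  have edge: "e \<in> E \<Longrightarrow> \<exists>u v. e = {u, v} \<and> u \<noteq> v \<and> u \<in> V \<and> v \<in> V" for e
    using graph_edge[OF g] by blast
  have gr: "graph (h ` V) E'" unfolding graph_def
  proof (intro conjI ballI)
    show "finite (h ` V)" using g unfolding graph_def by simp
    fix e' assume "e' \<in> E'"
    then obtain e where e: "e \<in> E" "e' = h ` e" unfolding E'_def by blast
    then obtain u v where uv: "e = {u, v}" "u \<noteq> v" "u \<in> V" "v \<in> V" using edge by blast
    then have "h u \<noteq> h v" using inj by (meson inj_onD)
    then show "\<exists>u v. e' = {u, v} \<and> u \<noteq> v \<and> u \<in> h ` V \<and> v \<in> h ` V"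
      using e uv by auto
  qed
  show "subgraph (h ` V) E' HV HE" unfolding subgraph_def
  proof (intro conjI)
    show "graph (h ` V) E'" by (rule gr)
    show "h ` V \<subseteq> HV" by (rule hv)
    show "E' \<subseteq> HE"
    proof
      fix e' assume "e' \<in> E'"
      then obtain e where e: "e \<in> E" "e' = h ` e" unfolding E'_def by blast
      then obtain u v where uv: "e = {u, v}" using edge by blast
      then show "e' \<in> HE" using he e by simp
    qed
  qed
  show "graph_iso V E (h ` V) E'" unfolding graph_iso_def
  proof (intro exI conjI ballI)
    show "bij_betw h V (h ` V)" using inj by (simp add: bij_betw_def)
    fix u v assume u: "u \<in> V" and v: "v \<in> V"
    show "{u, v} \<in> E \<longleftrightarrow> {h u, h v} \<in> E'"
    proof
      assume "{u, v} \<in> E"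
      then have "h ` {u, v} \<in> E'" unfolding E'_def by blast
      then show "{h u, h v} \<in> E'" by simp
    next
      assume "{h u, h v} \<in> E'"
      then obtain e where e: "e \<in> E" "{h u, h v} = h ` e" unfolding E'_def by blast
      then have "e \<subseteq> V" using graph_sub[OF g] by blast
      moreover have "{u, v} \<subseteq> V" using u v by simp
      moreover have "h ` {u, v} = h ` e" using e by simp
      moreover have "h ` {u, v} = h ` e \<longleftrightarrow> {u, v} = e"
        by (rule inj_on_image_eq_iff[OF inj]) (use \<open>e \<subseteq> V\<close> \<open>{u, v} \<subseteq> V\<close> in auto)
      ultimately have "{u, v} = e" by simp
      then show "{u, v} \<in> E" using e by simp
    qed
  qed
qed

lemma cw_bij:
  assumes g: "graph V E" and c: "cutwidth_le2 V E"
  shows "\<exists>f. bij_betw f V {1..card V} \<and> (\<forall>i. card (cross f E i) \<le> 2)"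
proof -
  obtain f where fb: "bij_betw f V {1..card V}" and
    cw: "\<forall>i. 1 \<le> i \<and> i < card V \<longrightarrow> card (cross f E i) \<le> 2"
    using c unfolding cw_alt by blast
  have "card (cross f E i) \<le> 2" for i
  proof (cases "1 \<le> i \<and> i < card V")
    case True then show ?thesis using cw by blast
  next
    case False
    have "cross f E i = {}"
    proof (rule ccontr)
      assume "cross f E i \<noteq> {}"
      then obtain e u v where "e \<in> E" "u \<in> e" "v \<in> e" "f u \<le> i" "i < f v"
        unfolding cross_def by blast
      moreover have "u \<in> V" "v \<in> V" using graph_sub[OF g \<open>e\<in>E\<close>] \<open>u\<in>e\<close> \<open>v\<in>e\<close> by auto
      moreover have "f u \<in> {1..card V}" "f v \<in> {1..card V}" using fb \<open>u\<in>V\<close> \<open>v\<in>V\<close> unfolding bij_betw_def by auto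
      ultimately show False using False by auto
    qed
    then show ?thesis by simp
  qed
  then show ?thesis using fb by blast
qed

locale spine =
  fixes V :: "'a set" and E :: "'a set set" and f :: "'a \<Rightarrow> nat" and p :: "nat \<Rightarrow> 'a" and r :: nat
  assumes g: "graph V E" and conn: "connected_graph V E" and acyc: "\<not> has_cycle V E"
    and fb: "bij_betw f V {1..card V}" and cw: "\<forall>i. card (cross f E i) \<le> 2"
    and pV: "\<forall>i\<le>r. p i \<in> V" and pE: "\<forall>i<r. {p i, p (Suc i)} \<in> E"
    and pm: "\<forall>i<r. f (p i) < f (p (Suc i))" and p0: "f (p 0) = 1" and pr: "f (p r) = card V"
begin

definition P where "P = p ` {..r}"
definition SE where "SE = {{p i, p (Suc i)} | i. i < r}"
definition R where "R = E - SE"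

lemma finV: "finite V" using g unfolding graph_def by simp
lemma finE: "finite E" using graph_finE[OF g] .
lemma finj: "inj_on f V" using fb unfolding bij_betw_def by simp
lemma frng: "x \<in> V \<Longrightarrow> 1 \<le> f x \<and> f x \<le> card V"
proof -
  assume "x \<in> V"
  then have "f x \<in> f ` V" by simp
  then show ?thesis using fb unfolding bij_betw_def by simp
qed
lemma feq: "x \<in> V \<Longrightarrow> y \<in> V \<Longrightarrow> f x = f y \<Longrightarrow> x = y"
  using finj by (rule inj_onD)

lemma pmono: "i < j \<Longrightarrow> j \<le> r \<Longrightarrow> f (p i) < f (p j)"
  using strict_chain[of r "f \<circ> p" i j] pm by simp

lemma pinj: "i \<le> r \<Longrightarrow> j \<le> r \<Longrightarrow> p i = p j \<Longrightarrow> i = j"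
  using pmono[of i j] pmono[of j i] by (cases "i < j"; cases "j < i") auto

lemma pmono_iff: "i \<le> r \<Longrightarrow> j \<le> r \<Longrightarrow> f (p i) < f (p j) \<longleftrightarrow> i < j"
  using pmono[of i j] pmono[of j i] by (cases "i < j"; cases "j < i") auto

lemma inP: "x \<in> P \<longleftrightarrow> (\<exists>k\<le>r. x = p k)" unfolding P_def by auto
lemma pP: "k \<le> r \<Longrightarrow> p k \<in> P" unfolding P_def by simp
lemma PV: "x \<in> P \<Longrightarrow> x \<in> V" using pV inP by auto

lemma Eedge: "{x, y} \<in> E \<Longrightarrow> x \<in> V \<and> y \<in> V \<and> x \<noteq> y"
proof -
  assume e: "{x, y} \<in> E"
  obtain u v where uv: "{x, y} = {u, v}" "u \<noteq> v" "u \<in> V" "v \<in> V" using graph_edge[OF g e] by blast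
  have "x \<in> {u, v}" "y \<in> {u, v}" using uv(1) by (metis insertI1, metis insertI1 insert_commute)
  moreover have "x \<noteq> y"
  proof
    assume "x = y"
    then have "u \<in> {x}" "v \<in> {x}" using uv(1) by (metis insertI1 insert_absorb2, metis insertI1 insert_commute insert_absorb2)
    then show False using uv(2) by simp
  qed
  ultimately show ?thesis using uv(3,4) by auto
qed

lemma Redge: "{x, y} \<in> R \<Longrightarrow> x \<in> V \<and> y \<in> V \<and> x \<noteq> y \<and> {x, y} \<in> E"
  using Eedge unfolding R_def by auto

lemma Rsym: "{x, y} \<in> R \<Longrightarrow> {y, x} \<in> R" by (simp add: insert_commute)

lemma SE_P: "{x, y} \<in> SE \<Longrightarrow> x \<in> P"
proof -
  assume "{x, y} \<in> SE"
  then obtain i where i: "i < r" "{x, y} = {p i, p (Suc i)}" unfolding SE_def by blast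
  then have "x = p i \<or> x = p (Suc i)" by (metis insertI1 insertE singletonD)
  then show ?thesis using i(1) pP by auto
qed

lemma R_nonP: "{x, y} \<in> E \<Longrightarrow> x \<notin> P \<Longrightarrow> {x, y} \<in> R"
  using SE_P unfolding R_def by blast

lemma pathV:
  assumes "\<forall>i<s. {q i, q (Suc i)} \<in> R" "0 < s" "i \<le> s"
  shows "q i \<in> V"
proof (cases "i < s")
  case True then show ?thesis using assms(1) Redge by blast
next
  case False
  obtain t where t: "s = Suc t" using assms(2) by (cases s) auto
  then have "i = Suc t" using assms False by simp
  moreover have "{q t, q (Suc t)} \<in> R" using assms(1) t by simp
  ultimately show ?thesis using Redge by metis
qed

lemma crossR: "{x, y} \<in> R \<Longrightarrow> f x \<le> i \<Longrightarrow> i < f y \<Longrightarrow> {x, y} \<in> cross f R i"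
  unfolding cross_def by blast

lemma spine_cross: "1 \<le> i \<Longrightarrow> i < card V \<Longrightarrow> \<exists>k<r. f (p k) \<le> i \<and> i < f (p (Suc k))"
  using cross_step[of "f \<circ> p" 0 i r] p0 pr by auto

lemma R1: "card (cross f R i) \<le> 1"
proof (cases "1 \<le> i \<and> i < card V")
  case True
  then obtain k where k: "k < r" "f (p k) \<le> i" "i < f (p (Suc k))" using spine_cross by blast
  define se where "se = {p k, p (Suc k)}"
  have seE: "se \<in> cross f E i" using pE k unfolding se_def cross_def by auto
  have seR: "se \<notin> R" unfolding R_def SE_def se_def using k by blast
  have sub: "insert se (cross f R i) \<subseteq> cross f E i" using seE unfolding cross_def R_def by auto
  have fin: "finite (cross f E i)" using finE unfolding cross_def by simp
  have "se \<notin> cross f R i" using seR unfolding cross_def by simp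
  then have "card (insert se (cross f R i)) = Suc (card (cross f R i))"
    using finite_subset[OF sub fin] by simp
  moreover have "card (insert se (cross f R i)) \<le> 2" using card_mono[OF fin sub] cw by (meson order_trans)
  ultimately show ?thesis by simp
next
  case False
  have "cross f R i = {}"
  proof (rule ccontr)
    assume "cross f R i \<noteq> {}"
    then obtain e u v where "e \<in> R" "u \<in> e" "v \<in> e" "f u \<le> i" "i < f v" unfolding cross_def by blast
    moreover have "u \<in> V" "v \<in> V" using graph_sub[OF g] \<open>e \<in> R\<close> \<open>u \<in> e\<close> \<open>v \<in> e\<close> unfolding R_def by auto
    ultimately show False using False frng[of u] frng[of v] by auto
  qed
  then show ?thesis by simp
qed

lemma R1eq: "e1 \<in> cross f R i \<Longrightarrow> e2 \<in> cross f R i \<Longrightarrow> e1 = e2"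
proof -
  assume a: "e1 \<in> cross f R i" "e2 \<in> cross f R i"
  have "finite (cross f R i)" using finE unfolding cross_def R_def by simp
  then show ?thesis using R1 a card_le_Suc0_iff_eq by (metis One_nat_def)
qed

lemma pair_eq: "{u, v1} = {u, v2} \<Longrightarrow> v1 \<noteq> u \<Longrightarrow> v1 = v2"
  by (metis doubleton_eq_iff)

lemma R2r: "{u, v1} \<in> R \<Longrightarrow> {u, v2} \<in> R \<Longrightarrow> f u < f v1 \<Longrightarrow> f u < f v2 \<Longrightarrow> v1 = v2"
proof -
  assume a: "{u, v1} \<in> R" "{u, v2} \<in> R" "f u < f v1" "f u < f v2"
  have "{u, v1} \<in> cross f R (f u)" "{u, v2} \<in> cross f R (f u)" using a crossR by auto
  then have "{u, v1} = {u, v2}" by (rule R1eq)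
  moreover have "v1 \<noteq> u" using a by auto
  ultimately show ?thesis by (rule pair_eq)
qed

lemma R2l: "{u, v1} \<in> R \<Longrightarrow> {u, v2} \<in> R \<Longrightarrow> f v1 < f u \<Longrightarrow> f v2 < f u \<Longrightarrow> v1 = v2"
proof -
  assume a: "{u, v1} \<in> R" "{u, v2} \<in> R" "f v1 < f u" "f v2 < f u"
  have "{v1, u} \<in> cross f R (f u - 1)" "{v2, u} \<in> cross f R (f u - 1)"
    using a Rsym crossR[of v1 u "f u - 1"] crossR[of v2 u "f u - 1"] by auto
  then have "{v1, u} = {v2, u}" by (rule R1eq)
  then have "{u, v1} = {u, v2}" by (simp add: insert_commute)
  moreover have "v1 \<noteq> u" using a by auto
  ultimately show ?thesis by (rule pair_eq)
qed

definition rdir where "rdir x k q s \<longleftrightarrow> k \<le> r \<and> q 0 = x \<and> q s = p k \<and> 0 < s \<and>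
  (\<forall>i<s. {q i, q (Suc i)} \<in> R \<and> f (q i) < f (q (Suc i))) \<and> (\<forall>i<s. q i \<notin> P)"
definition ldir where "ldir x k q s \<longleftrightarrow> k \<le> r \<and> q 0 = p k \<and> q s = x \<and> 0 < s \<and>
  (\<forall>i<s. {q i, q (Suc i)} \<in> R \<and> f (q i) < f (q (Suc i))) \<and> (\<forall>i. 0 < i \<and> i \<le> s \<longrightarrow> q i \<notin> P)"
definition dir where "dir x k \<longleftrightarrow> (\<exists>q s. rdir x k q s \<or> ldir x k q s)"

lemma chain_lt:
  assumes "\<forall>i<s. {q i, q (Suc i)} \<in> R \<and> f (q i) < f (q (Suc i))" "i < j" "j \<le> s"
  shows "f (q i) < f (q j)"
  using strict_chain[of s "f \<circ> q" i j] assms by simp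

lemma rdir_V: "rdir x k q s \<Longrightarrow> i \<le> s \<Longrightarrow> q i \<in> V"
  unfolding rdir_def using pathV[of s q i] by auto
lemma ldir_V: "ldir x k q s \<Longrightarrow> i \<le> s \<Longrightarrow> q i \<in> V"
  unfolding ldir_def using pathV[of s q i] by auto

lemma ext_dir:
  assumes yz: "{y, z} \<in> E" and y: "y \<in> P \<or> (\<exists>k. dir y k)" and z: "z \<notin> P"
  shows "\<exists>k. dir z k"
proof -
  have zyR: "{z, y} \<in> R" using R_nonP[of z y] yz z by (simp add: insert_commute)
  then have yzR: "{y, z} \<in> R" by (rule Rsym)
  have VV: "y \<in> V" "z \<in> V" "y \<noteq> z" using Redge[OF yzR] by auto
  have fne: "f y \<noteq> f z" using feq VV by blast
  show ?thesis
  proof (cases "y \<in> P")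
    case True
    then obtain k where k: "k \<le> r" "y = p k" using inP by blast
    show ?thesis
    proof (cases "f z < f y")
      case True
      have "rdir z k (\<lambda>i. if i = 0 then z else p k) 1"
        unfolding rdir_def using k True zyR z by auto
      then show ?thesis unfolding dir_def by blast
    next
      case False
      then have "f y < f z" using fne by simp
      have "ldir z k (\<lambda>i. if i = 0 then p k else z) 1"
        unfolding ldir_def using k \<open>f y < f z\<close> yzR z by auto
      then show ?thesis unfolding dir_def by blast
    qed
  next
    case False
    then obtain k q s where d: "rdir y k q s \<or> ldir y k q s" using y unfolding dir_def by blast
    then show ?thesis
    proof
      assume rd: "rdir y k q s"
      then have q: "k \<le> r" "q 0 = y" "q s = p k" "0 < s" "\<forall>i<s. {q i, q (Suc i)} \<in> R \<and> f (q i) < f (q (Suc i))"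
        "\<forall>i<s. q i \<notin> P" unfolding rdir_def by auto
      show ?thesis
      proof (cases "f z < f y")
        case True
        define q' where "q' i = (if i = 0 then z else q (i - 1))" for i
        have "rdir z k q' (Suc s)" unfolding rdir_def
        proof (intro conjI allI impI)
          fix i assume i: "i < Suc s"
          show "{q' i, q' (Suc i)} \<in> R" using i zyR q unfolding q'_def by (cases i) auto
          show "f (q' i) < f (q' (Suc i))" using i True q unfolding q'_def by (cases i) auto
          show "q' i \<notin> P" using i z q unfolding q'_def by (cases i) auto
        qed (use q in \<open>auto simp: q'_def\<close>)
        then show ?thesis unfolding dir_def by blast
      next
        case False
        then have lt: "f y < f z" using fne by simp
        have q1: "{y, q 1} \<in> R" "f y < f (q 1)" using q by (metis One_nat_def)+
        have zq: "z = q 1" using R2r[OF yzR q1(1) lt q1(2)] .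
        have s1: "s \<noteq> 1" using zq q z pP by auto
        have "rdir z k (\<lambda>i. q (Suc i)) (s - 1)" unfolding rdir_def
          using q s1 zq by auto
        then show ?thesis unfolding dir_def by blast
      qed
    next
      assume ld: "ldir y k q s"
      then have q: "k \<le> r" "q 0 = p k" "q s = y" "0 < s" "\<forall>i<s. {q i, q (Suc i)} \<in> R \<and> f (q i) < f (q (Suc i))"
        "\<forall>i. 0 < i \<and> i \<le> s \<longrightarrow> q i \<notin> P" unfolding ldir_def by auto
      show ?thesis
      proof (cases "f y < f z")
        case True
        define q' where "q' = q(Suc s := z)"
        have "ldir z k q' (Suc s)" unfolding ldir_def
        proof (intro conjI allI impI)
          fix i assume i: "i < Suc s"
          show "{q' i, q' (Suc i)} \<in> R" using i yzR q unfolding q'_def by (cases "i = s") auto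
          show "f (q' i) < f (q' (Suc i))" using i True q unfolding q'_def by (cases "i = s") auto
        next
          fix i assume i: "0 < i \<and> i \<le> Suc s"
          show "q' i \<notin> P" using i z q unfolding q'_def by (cases "i = Suc s") auto
        qed (use q in \<open>auto simp: q'_def\<close>)
        then show ?thesis unfolding dir_def by blast
      next
        case False
        then have lt: "f z < f y" using fne by simp
        obtain t where t: "s = Suc t" using q(4) by (cases s) auto
        have e: "{q t, q (Suc t)} \<in> R" "f (q t) < f (q (Suc t))" using q(5) t by auto
        then have q1: "{y, q (s - 1)} \<in> R" "f (q (s - 1)) < f y" using q(3) t Rsym by auto
        have zq: "z = q (s - 1)" using R2l[OF yzR q1(1) lt q1(2)] .
        have s1: "s \<noteq> 1" using zq q z pP by auto
        have "ldir z k q (s - 1)" unfolding ldir_def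
          using q s1 zq by auto
        then show ?thesis unfolding dir_def by blast
      qed
    qed
  qed
qed

lemma ex_dir: "x \<in> V \<Longrightarrow> x \<notin> P \<Longrightarrow> \<exists>k. dir x k"
proof -
  assume x: "x \<in> V" "x \<notin> P"
  have p0V: "p 0 \<in> V" using pV by simp
  have "(p 0, x) \<in> (adj_rel E)\<^sup>*" using conn p0V x unfolding connected_graph_def by blast
  then have "x \<in> P \<or> (\<exists>k. dir x k)"
  proof (induction rule: rtrancl_induct)
    case base then show ?case using pP by simp
  next
    case (step y z)
    then have "{y, z} \<in> E" unfolding adj_rel_def by simp
    then show ?case using ext_dir step.IH by blast
  qed
  then show ?thesis using x by blast
qed


lemma rdir_lt: "rdir x k q s \<Longrightarrow> rdir x k' q' s' \<Longrightarrow> k < k' \<Longrightarrow> False"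
proof -
  assume rd: "rdir x k q s" and rd': "rdir x k' q' s'" and kk: "k < k'"
  have q: "k \<le> r" "q 0 = x" "q s = p k" "0 < s" "\<forall>i<s. {q i, q (Suc i)} \<in> R \<and> f (q i) < f (q (Suc i))"
    using rd unfolding rdir_def by auto
  have q': "k' \<le> r" "q' 0 = x" "q' s' = p k'" "0 < s'" "\<forall>i<s'. {q' i, q' (Suc i)} \<in> R \<and> f (q' i) < f (q' (Suc i))"
    "\<forall>i<s'. q' i \<notin> P" using rd' unfolding rdir_def by auto
  obtain t where t: "s = Suc t" using q(4) by (cases s) auto
  define i where "i = f (p k) - 1"
  have et: "{q t, q (Suc t)} \<in> R" "f (q t) < f (q (Suc t))" using q(5) t by auto
  then have e1: "{q t, p k} \<in> cross f R i" using crossR[of "q t" "p k" i] q(3) t unfolding i_def by auto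
  have "f x < f (p k)" using chain_lt[OF q(5), of 0 s] q by simp
  then have a0: "f (q' 0) \<le> i" using q' unfolding i_def by simp
  have "f (p k) < f (p k')" using pmono kk q' by simp
  then have a1: "i < f (q' s')" using q' unfolding i_def by simp
  obtain j where j: "j < s'" "f (q' j) \<le> i" "i < f (q' (Suc j))"
    using cross_step[of "f \<circ> q'" 0 i s'] a0 a1 by auto
  have e2: "{q' j, q' (Suc j)} \<in> cross f R i" using crossR q'(5) j by auto
  have "{q t, p k} = {q' j, q' (Suc j)}" using R1eq[OF e1 e2] .
  then have "p k = q' j \<or> p k = q' (Suc j)" by (metis insertI1 insert_commute insertE singletonD)
  moreover have "q' j \<notin> P" using q' j by simp
  moreover have "p k \<in> P" using pP q by simp
  ultimately have pk: "p k = q' (Suc j)" by auto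
  show False
  proof (cases "Suc j < s'")
    case True then show False using q'(6) pk \<open>p k \<in> P\<close> by auto
  next
    case False
    then have "Suc j = s'" using j by simp
    then have "p k = p k'" using pk q' by simp
    then show False using pinj[of k k'] pinj[of k' k] q(1) q'(1) kk by auto
  qed
qed

lemma ldir_lt: "ldir x k q s \<Longrightarrow> ldir x k' q' s' \<Longrightarrow> k < k' \<Longrightarrow> False"
proof -
  assume rd: "ldir x k q s" and rd': "ldir x k' q' s'" and kk: "k < k'"
  have q: "k \<le> r" "q 0 = p k" "q s = x" "0 < s" "\<forall>i<s. {q i, q (Suc i)} \<in> R \<and> f (q i) < f (q (Suc i))"
    "\<forall>i. 0 < i \<and> i \<le> s \<longrightarrow> q i \<notin> P" using rd unfolding ldir_def by auto
  have q': "k' \<le> r" "q' 0 = p k'" "q' s' = x" "0 < s'" "\<forall>i<s'. {q' i, q' (Suc i)} \<in> R \<and> f (q' i) < f (q' (Suc i))"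
    using rd' unfolding ldir_def by auto
  define i where "i = f (p k')"
  have e1: "{q' 0, q' 1} \<in> cross f R i" using crossR[of "q' 0" "q' 1" i] q' unfolding i_def
    by (metis One_nat_def order_refl)
  have a0: "f (q 0) \<le> i" using pmono kk q' q unfolding i_def by (simp add: less_imp_le)
  have "f (q' 0) < f (q' s')" using chain_lt[OF q'(5), of 0 s'] q' by simp
  then have a1: "i < f (q s)" using q q' unfolding i_def by simp
  obtain j where j: "j < s" "f (q j) \<le> i" "i < f (q (Suc j))"
    using cross_step[of "f \<circ> q" 0 i s] a0 a1 by auto
  have e2: "{q j, q (Suc j)} \<in> cross f R i" using crossR q(5) j by auto
  have "{q' 0, q' 1} = {q j, q (Suc j)}" using R1eq[OF e1 e2] .
  then have "p k' = q j \<or> p k' = q (Suc j)" using q' by (metis insertI1 insertE singletonD)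
  moreover have "q (Suc j) \<notin> P" using q j by simp
  moreover have "p k' \<in> P" using pP q' by simp
  ultimately have pk: "p k' = q j" by auto
  show False
  proof (cases "0 < j")
    case True then show False using q(6) pk \<open>p k' \<in> P\<close> j by auto
  next
    case False
    then have "p k' = p k" using pk q by simp
    then show False using pinj[of k k'] pinj[of k' k] q(1) q'(1) kk by auto
  qed
qed

lemma nat3: "(a::nat) \<noteq> b \<Longrightarrow> a < b \<or> b < a" by linarith

lemma rdir_uniq: "rdir x k q s \<Longrightarrow> rdir x k' q' s' \<Longrightarrow> k = k'"
  using rdir_lt nat3 by metis
lemma ldir_uniq: "ldir x k q s \<Longrightarrow> ldir x k' q' s' \<Longrightarrow> k = k'"
  using ldir_lt nat3 by metis

lemma cycle_lemma:
  assumes jk: "j < k" "k \<le> r" and c0: "c 0 = p j" and ct: "c t = p k" and t0: "0 < t"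
    and ce: "\<forall>i<t. {c i, c (Suc i)} \<in> E \<and> f (c i) < f (c (Suc i))"
    and cP: "\<forall>i. 0 < i \<and> i < t \<longrightarrow> c i \<notin> P"
    and len: "2 \<le> t \<or> Suc j < k"
  shows False
proof -
  define d where "d = k - j"
  define h where "h i = (if i \<le> d then p (j + i) else c (t + d - i))" for i
  define n where "n = d + t"
  define xs where "xs = map h [0..<n]"
  have d1: "1 \<le> d" using jk unfolding d_def by simp
  have cV: "c i \<in> V" if "i \<le> t" for i
  proof (cases "i < t")
    case True then show ?thesis using ce Eedge by blast
  next
    case False then have "i = t" using that by simp
    then show ?thesis using ct pV jk by simp
  qed
  have cinj: "c a = c b \<Longrightarrow> a \<le> t \<Longrightarrow> b \<le> t \<Longrightarrow> a = b" for a b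
  proof -
    assume ab: "c a = c b" "a \<le> t" "b \<le> t"
    have ce': "\<forall>i<t. f (c i) < f (c (Suc i))" using ce by simp
    show "a = b"
    proof (rule ccontr)
      assume "a \<noteq> b"
      then have "a < b \<or> b < a" by linarith
      then show False using strict_chain[OF ce', of a b] strict_chain[OF ce', of b a] ab by auto
    qed
  qed
  have hmid: "h i \<notin> P" if "d < i" "i < n" for i
  proof -
    have "h i = c (t + d - i)" unfolding h_def using that by simp
    moreover have "0 < t + d - i" "t + d - i < t" using that unfolding n_def by auto
    ultimately show ?thesis using cP by simp
  qed
  have hlow: "h i \<in> P" if "i \<le> d" for i
    using that pP jk unfolding h_def d_def by simp
  have "has_cycle V E" unfolding has_cycle_def
  proof (intro exI conjI)
    show "3 \<le> length xs" using len d1 t0 unfolding xs_def n_def d_def by auto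
    show "distinct xs" unfolding xs_def distinct_map
    proof
      show "distinct [0..<n]" by simp
      show "inj_on h (set [0..<n])"
      proof (rule inj_onI)
        fix a b assume a: "a \<in> set [0..<n]" and b: "b \<in> set [0..<n]" and hab: "h a = h b"
        show "a = b"
        proof (cases "a \<le> d")
          case True
          note ad = True
          show ?thesis
          proof (cases "b \<le> d")
            case True
            then have "p (j + a) = p (j + b)" using ad hab unfolding h_def by simp
            then show ?thesis using pinj[of "j + a" "j + b"] ad True jk unfolding d_def by simp
          next
            case False
            then show ?thesis using hlow[OF ad] hmid[of b] b hab by auto
          qed
        next
          case False
          note ad = False
          show ?thesis
          proof (cases "b \<le> d")
            case True
            then show ?thesis using hlow[OF True] hmid[of a] a hab ad by auto
          next
            case False
            then have "c (t + d - a) = c (t + d - b)" using ad hab unfolding h_def by simp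
            then have "t + d - a = t + d - b" using cinj[of "t + d - a" "t + d - b"] ad False by simp
            then show ?thesis using a b ad False unfolding n_def by auto
          qed
        qed
      qed
    qed
    show "set xs \<subseteq> V"
    proof
      fix y assume "y \<in> set xs"
      then obtain i where i: "i < n" "y = h i" unfolding xs_def by auto
      show "y \<in> V"
      proof (cases "i \<le> d")
        case True then show ?thesis using i pV jk unfolding h_def d_def by simp
      next
        case False then show ?thesis using i cV unfolding h_def n_def by simp
      qed
    qed
    show "\<forall>i < length xs - 1. {xs ! i, xs ! (i + 1)} \<in> E"
    proof (intro allI impI)
      fix i assume i: "i < length xs - 1"
      then have i': "i + 1 < n" unfolding xs_def by simp
      have xi: "xs ! i = h i" "xs ! (i + 1) = h (i + 1)" using i' unfolding xs_def by auto
      show "{xs ! i, xs ! (i + 1)} \<in> E"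
      proof (cases "i < d")
        case True
        then have "{xs ! i, xs ! (i + 1)} = {p (j + i), p (Suc (j + i))}" using xi unfolding h_def by simp
        moreover have "j + i < r" using True jk unfolding d_def by simp
        ultimately show ?thesis using pE by simp
      next
        case False
        show ?thesis
        proof (cases "i = d")
          case True
          have "xs ! i = c t" using xi True ct jk unfolding h_def d_def by simp
          moreover have "xs ! (i + 1) = c (t - 1)" using xi True unfolding h_def by simp
          moreover have "1 < t" using i' True unfolding n_def by simp
          moreover have "{c (t - 1), c t} \<in> E"
          proof -
            have "t - 1 < t" using t0 by simp
            then have "{c (t - 1), c (Suc (t - 1))} \<in> E" using spec[OF ce, of "t - 1"] by simp
            moreover have "Suc (t - 1) = t" using t0 by simp
            ultimately show ?thesis by simp
          qed
          ultimately show ?thesis by (simp add: insert_commute)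
        next
          case False
          then have di: "d < i" using \<open>\<not> i < d\<close> by simp
          define a where "a = t + d - i - 1"
          have ai: "t + d - i = Suc a" using di i' unfolding a_def n_def by simp
          have ai2: "t + d - (i + 1) = a" unfolding a_def by simp
          have "xs ! i = c (t + d - i)" "xs ! (i + 1) = c (t + d - (i + 1))" using xi di unfolding h_def by auto
          then have "xs ! i = c (Suc a)" "xs ! (i + 1) = c a" using ai ai2 by simp_all
          moreover have "a < t" using di t0 unfolding a_def by simp
          ultimately show ?thesis using ce by (simp add: insert_commute)
        qed
      qed
    qed
    show "{last xs, hd xs} \<in> E"
    proof -
      have n0: "0 < n" unfolding n_def using t0 by simp
      have hd: "hd xs = c 0" unfolding xs_def using n0 c0 by (simp add: hd_map h_def)
      have lst: "last xs = h (n - 1)" unfolding xs_def using n0 by (simp add: last_map)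
      show ?thesis
      proof (cases "2 \<le> t")
        case True
        then have "\<not> n - 1 \<le> d" "t + d - (n - 1) = 1" unfolding n_def by auto
        then have "h (n - 1) = c 1" unfolding h_def by simp
        then have "{last xs, hd xs} = {c 0, c (Suc 0)}" using lst hd by (simp add: insert_commute)
        then show ?thesis using ce t0 by simp
      next
        case False
        then have "t = 1" using t0 by simp
        then have "h (n - 1) = c 1" unfolding h_def n_def using ct jk d_def by simp
        then have "{last xs, hd xs} = {c 0, c (Suc 0)}" using lst hd by (simp add: insert_commute)
        then show ?thesis using ce t0 by simp
      qed
    qed
  qed
  then show False using acyc by simp
qed

lemma not_both: "rdir x k q s \<Longrightarrow> ldir x k' q' s' \<Longrightarrow> False"
proof -
  assume rd: "rdir x k q s" and ld: "ldir x k' q' s'"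
  have q: "k \<le> r" "q 0 = x" "q s = p k" "0 < s" "\<forall>i<s. {q i, q (Suc i)} \<in> R \<and> f (q i) < f (q (Suc i))"
    "\<forall>i<s. q i \<notin> P" using rd unfolding rdir_def by auto
  have q': "k' \<le> r" "q' 0 = p k'" "q' s' = x" "0 < s'" "\<forall>i<s'. {q' i, q' (Suc i)} \<in> R \<and> f (q' i) < f (q' (Suc i))"
    "\<forall>i. 0 < i \<and> i \<le> s' \<longrightarrow> q' i \<notin> P" using ld unfolding ldir_def by auto
  define c where "c i = (if i \<le> s' then q' i else q (i - s'))" for i
  have ce: "\<forall>i<s' + s. {c i, c (Suc i)} \<in> R \<and> f (c i) < f (c (Suc i))"
  proof (intro allI impI)
    fix i assume i: "i < s' + s"
    show "{c i, c (Suc i)} \<in> R \<and> f (c i) < f (c (Suc i))"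
    proof (cases "i < s'")
      case True then show ?thesis using q' unfolding c_def by auto
    next
      case False
      then have "c i = q (i - s')" "c (Suc i) = q (Suc (i - s'))"
        using q q' unfolding c_def by (auto simp: Suc_diff_le)
      moreover have "i - s' < s" using i False by simp
      ultimately show ?thesis using q by simp
    qed
  qed
  have c0: "c 0 = p k'" using q' unfolding c_def by simp
  have ct: "c (s' + s) = p k" using q q' unfolding c_def by simp
  have cP: "\<forall>i. 0 < i \<and> i < s' + s \<longrightarrow> c i \<notin> P"
  proof (intro allI impI)
    fix i assume i: "0 < i \<and> i < s' + s"
    show "c i \<notin> P"
    proof (cases "i \<le> s'")
      case True then show ?thesis using q' i unfolding c_def by simp
    next
      case False then show ?thesis using q i unfolding c_def by simp
    qed
  qed
  have "f (c 0) < f (c (s' + s))" using chain_lt[OF ce, of 0 "s' + s"] q q' by simp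
  then have "k' < k" using c0 ct pmono_iff q q' by simp
  moreover have ceE: "\<forall>i<s' + s. {c i, c (Suc i)} \<in> E \<and> f (c i) < f (c (Suc i))"
    using ce unfolding R_def by simp
  ultimately show False using cycle_lemma[of k' k c "s' + s"] c0 ct q q' cP by simp
qed

lemma no_PP: "{p j, p k} \<in> R \<Longrightarrow> j \<le> r \<Longrightarrow> k \<le> r \<Longrightarrow> False"
proof -
  have main: "{p j, p k} \<in> R \<Longrightarrow> j < k \<Longrightarrow> k \<le> r \<Longrightarrow> False" for j k
  proof -
    assume a: "{p j, p k} \<in> R" "j < k" "k \<le> r"
    have "Suc j \<noteq> k"
    proof
      assume "Suc j = k"
      then have "{p j, p k} \<in> SE" unfolding SE_def using a by auto
      then show False using a(1) unfolding R_def by simp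
    qed
    then have sj: "Suc j < k" using a by simp
    define c where "c i = (if i = 0 then p j else p k)" for i :: nat
    have "\<forall>i<1. {c i, c (Suc i)} \<in> E \<and> f (c i) < f (c (Suc i))"
      using a pmono unfolding c_def R_def by auto
    then show False using cycle_lemma[of j k c 1] a sj unfolding c_def by auto
  qed
  assume a: "{p j, p k} \<in> R" "j \<le> r" "k \<le> r"
  have "p j \<noteq> p k" using Redge[OF a(1)] by simp
  then have "j \<noteq> k" by auto
  then have "j < k \<or> k < j" by linarith
  then show False using main[of j k] main[of k j] a Rsym by auto
qed


lemma dir_uniq: "dir x k \<Longrightarrow> dir x k' \<Longrightarrow> k = k'"
  unfolding dir_def using rdir_uniq ldir_uniq not_both by metis

definition att where "att x = (THE k. dir x k)"
definition lft where "lft x \<longleftrightarrow> f x < f (p (att x))"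
definition inw where "inw x = (THE y. {x, y} \<in> R \<and> (f x < f y \<longleftrightarrow> lft x))"

lemma att_eq: "dir x k \<Longrightarrow> att x = k"
proof -
  assume d: "dir x k"
  show ?thesis unfolding att_def
  proof (rule the_equality)
    show "dir x k" by (rule d)
    fix y assume "dir x y" then show "y = k" using dir_uniq d by blast
  qed
qed

lemma att_dir: "x \<in> V \<Longrightarrow> x \<notin> P \<Longrightarrow> dir x (att x)"
  using ex_dir att_eq by blast

lemma att_le: "x \<in> V \<Longrightarrow> x \<notin> P \<Longrightarrow> att x \<le> r"
  using att_dir unfolding dir_def rdir_def ldir_def by blast

lemma rdir_lft: "rdir x k q s \<Longrightarrow> lft x \<and> att x = k"
proof -
  assume rd: "rdir x k q s"
  then have "att x = k" using att_eq unfolding dir_def by blast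
  moreover have "f (q 0) < f (q s)" using rd chain_lt[of s q 0 s] unfolding rdir_def by auto
  ultimately show ?thesis using rd unfolding lft_def rdir_def by auto
qed

lemma ldir_lft: "ldir x k q s \<Longrightarrow> \<not> lft x \<and> att x = k"
proof -
  assume rd: "ldir x k q s"
  then have "att x = k" using att_eq unfolding dir_def by blast
  moreover have "f (q 0) < f (q s)" using rd chain_lt[of s q 0 s] unfolding ldir_def by auto
  ultimately show ?thesis using rd unfolding lft_def ldir_def by auto
qed

lemma inw_r: "rdir x k q s \<Longrightarrow> inw x = q 1"
proof -
  assume rd: "rdir x k q s"
  have l: "lft x" using rdir_lft[OF rd] by simp
  have q1: "{x, q 1} \<in> R" "f x < f (q 1)" using rd unfolding rdir_def by (metis One_nat_def)+
  show ?thesis unfolding inw_def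
  proof (rule the_equality)
    show "{x, q 1} \<in> R \<and> (f x < f (q 1) \<longleftrightarrow> lft x)" using q1 l by simp
    fix y assume "{x, y} \<in> R \<and> (f x < f y \<longleftrightarrow> lft x)"
    then show "y = q 1" using R2r[of x y "q 1"] q1 l by auto
  qed
qed

lemma inw_l: "ldir x k q s \<Longrightarrow> inw x = q (s - 1)"
proof -
  assume rd: "ldir x k q s"
  have l: "\<not> lft x" using ldir_lft[OF rd] by simp
  have q: "q s = x" "0 < s" "\<forall>i<s. {q i, q (Suc i)} \<in> R \<and> f (q i) < f (q (Suc i))" using rd unfolding ldir_def by auto
  obtain t where t: "s = Suc t" using q(2) by (cases s) auto
  have q1: "{x, q (s - 1)} \<in> R" "f (q (s - 1)) < f x" using q t Rsym by auto
  have xV: "x \<in> V" using Redge[OF q1(1)] by simp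
  show ?thesis unfolding inw_def
  proof (rule the_equality)
    show "{x, q (s - 1)} \<in> R \<and> (f x < f (q (s - 1)) \<longleftrightarrow> lft x)" using q1 l by simp
    fix y assume y: "{x, y} \<in> R \<and> (f x < f y \<longleftrightarrow> lft x)"
    then have "y \<in> V" "x \<noteq> y" using Redge by auto
    then have "f x \<noteq> f y" using feq xV by blast
    then have "f y < f x" using y l by simp
    then show "y = q (s - 1)" using R2l[of x y "q (s - 1)"] q1 y by auto
  qed
qed

lemma I1: "x \<in> V \<Longrightarrow> x \<notin> P \<Longrightarrow> {x, inw x} \<in> R \<and> (f x < f (inw x) \<longleftrightarrow> lft x)"
proof -
  assume x: "x \<in> V" "x \<notin> P"
  obtain q s where d: "rdir x (att x) q s \<or> ldir x (att x) q s" using att_dir[OF x] unfolding dir_def by blast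
  then show ?thesis
  proof
    assume rd: "rdir x (att x) q s"
    have "{x, q 1} \<in> R" "f x < f (q 1)" using rd unfolding rdir_def by (metis One_nat_def)+
    then show ?thesis using inw_r[OF rd] rdir_lft[OF rd] by simp
  next
    assume rd: "ldir x (att x) q s"
    have q: "q s = x" "0 < s" "\<forall>i<s. {q i, q (Suc i)} \<in> R \<and> f (q i) < f (q (Suc i))" using rd unfolding ldir_def by auto
    obtain t where t: "s = Suc t" using q(2) by (cases s) auto
    have "{x, q (s - 1)} \<in> R" "f (q (s - 1)) < f x" using q t Rsym by auto
    then show ?thesis using inw_l[OF rd] ldir_lft[OF rd] by simp
  qed
qed

lemma I2: "x \<in> V \<Longrightarrow> x \<notin> P \<Longrightarrow> inw x = p (att x) \<or>
    (inw x \<in> V \<and> inw x \<notin> P \<and> att (inw x) = att x \<and> lft (inw x) = lft x)"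
proof -
  assume x: "x \<in> V" "x \<notin> P"
  obtain q s where d: "rdir x (att x) q s \<or> ldir x (att x) q s" using att_dir[OF x] unfolding dir_def by blast
  then show ?thesis
  proof
    assume rd: "rdir x (att x) q s"
    have q: "att x \<le> r" "q 0 = x" "q s = p (att x)" "0 < s" "\<forall>i<s. {q i, q (Suc i)} \<in> R \<and> f (q i) < f (q (Suc i))"
      "\<forall>i<s. q i \<notin> P" using rd unfolding rdir_def by auto
    show ?thesis
    proof (cases "s = 1")
      case True then show ?thesis using inw_r[OF rd] q by simp
    next
      case False
      have rd1: "rdir (q 1) (att x) (\<lambda>i. q (Suc i)) (s - 1)" unfolding rdir_def using q False by auto
      have "q 1 \<in> V" using rdir_V[OF rd, of 1] q by simp
      moreover have "q 1 \<notin> P" using q False by simp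
      ultimately show ?thesis using inw_r[OF rd] rdir_lft[OF rd] rdir_lft[OF rd1] by simp
    qed
  next
    assume rd: "ldir x (att x) q s"
    have q: "att x \<le> r" "q 0 = p (att x)" "q s = x" "0 < s" "\<forall>i<s. {q i, q (Suc i)} \<in> R \<and> f (q i) < f (q (Suc i))"
      "\<forall>i. 0 < i \<and> i \<le> s \<longrightarrow> q i \<notin> P" using rd unfolding ldir_def by auto
    show ?thesis
    proof (cases "s = 1")
      case True then show ?thesis using inw_l[OF rd] q by simp
    next
      case False
      have rd1: "ldir (q (s - 1)) (att x) q (s - 1)" unfolding ldir_def using q False by auto
      have "q (s - 1) \<in> V" using ldir_V[OF rd, of "s - 1"] by simp
      moreover have "q (s - 1) \<notin> P" using q False by simp
      ultimately show ?thesis using inw_l[OF rd] ldir_lft[OF rd] ldir_lft[OF rd1] by simp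
    qed
  qed
qed

lemma I3r: "x \<in> V \<Longrightarrow> x \<notin> P \<Longrightarrow> y \<in> V \<Longrightarrow> y \<notin> P \<Longrightarrow> lft y \<Longrightarrow>
    f x < f y \<Longrightarrow> f y < f (inw x) \<Longrightarrow> False"
proof -
  assume x: "x \<in> V" "x \<notin> P" and y: "y \<in> V" "y \<notin> P" "lft y" and lt: "f x < f y" "f y < f (inw x)"
  have ix: "{x, inw x} \<in> R" using I1[OF x] by simp
  have iy: "{y, inw y} \<in> R" "f y < f (inw y)" using I1[OF y(1,2)] y(3) by auto
  have "{x, inw x} \<in> cross f R (f y)" using crossR[OF ix] lt by simp
  moreover have "{y, inw y} \<in> cross f R (f y)" using crossR[OF iy(1)] iy(2) by simp
  ultimately have "{x, inw x} = {y, inw y}" by (rule R1eq)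
  then have "y = x \<or> y = inw x" by (metis insertI1 insertE singletonD)
  then show False using lt by auto
qed

lemma I3l: "x \<in> V \<Longrightarrow> x \<notin> P \<Longrightarrow> y \<in> V \<Longrightarrow> y \<notin> P \<Longrightarrow> \<not> lft y \<Longrightarrow>
    f (inw x) < f y \<Longrightarrow> f y < f x \<Longrightarrow> False"
proof -
  assume x: "x \<in> V" "x \<notin> P" and y: "y \<in> V" "y \<notin> P" "\<not> lft y" and lt: "f (inw x) < f y" "f y < f x"
  have ix: "{inw x, x} \<in> R" using I1[OF x] Rsym by simp
  have iy0: "{y, inw y} \<in> R" "\<not> f y < f (inw y)" using I1[OF y(1,2)] y(3) by auto
  have "inw y \<in> V" "y \<noteq> inw y" using Redge[OF iy0(1)] by auto
  then have "f y \<noteq> f (inw y)" using feq y by blast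
  then have iyl: "f (inw y) < f y" using iy0 by simp
  have iy: "{inw y, y} \<in> R" using iy0 Rsym by simp
  have "{inw x, x} \<in> cross f R (f y - 1)" using crossR[OF ix] lt by simp
  moreover have "{inw y, y} \<in> cross f R (f y - 1)" using crossR[OF iy] iyl by simp
  ultimately have "{inw x, x} = {inw y, y}" by (rule R1eq)
  then have "y = x \<or> y = inw x" by (metis insertI1 insertE singletonD insert_commute)
  then show False using lt by auto
qed

lemma I5a: "{u, v} \<in> R \<Longrightarrow> u \<notin> P \<Longrightarrow> v = inw u \<or> (v \<notin> P \<and> u = inw v)"
proof -
  assume uv: "{u, v} \<in> R" and uP: "u \<notin> P"
  have VV: "u \<in> V" "v \<in> V" "u \<noteq> v" using Redge[OF uv] by auto
  have fne: "f u \<noteq> f v" using feq VV by blast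
  obtain q s where d: "rdir u (att u) q s \<or> ldir u (att u) q s" using att_dir[OF VV(1) uP] unfolding dir_def by blast
  then show ?thesis
  proof
    assume rd: "rdir u (att u) q s"
    have q: "att u \<le> r" "q 0 = u" "q s = p (att u)" "0 < s" "\<forall>i<s. {q i, q (Suc i)} \<in> R \<and> f (q i) < f (q (Suc i))"
      "\<forall>i<s. q i \<notin> P" using rd unfolding rdir_def by auto
    have q1: "{u, q 1} \<in> R" "f u < f (q 1)" using rd unfolding rdir_def by (metis One_nat_def)+
    show ?thesis
    proof (cases "f u < f v")
      case True
      have "v = q 1" using R2r[OF uv q1(1) True q1(2)] .
      then show ?thesis using inw_r[OF rd] by simp
    next
      case False
      then have vu: "f v < f u" using fne by simp
      have vuR: "{v, u} \<in> R" using uv Rsym by simp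
      show ?thesis
      proof (cases "v \<in> P")
        case True
        then obtain j where j: "j \<le> r" "v = p j" using inP by blast
        have "ldir u j (\<lambda>i. if i = 0 then p j else u) 1" unfolding ldir_def using j vu Rsym[OF uv] uP by auto
        then show ?thesis using not_both rd by blast
      next
        case False
        define q' where "q' i = (if i = 0 then v else q (i - 1))" for i
        have rd': "rdir v (att u) q' (Suc s)" unfolding rdir_def
        proof (intro conjI allI impI)
          fix i assume i: "i < Suc s"
          show "{q' i, q' (Suc i)} \<in> R" using i vuR q unfolding q'_def by (cases i) auto
          show "f (q' i) < f (q' (Suc i))" using i vu q unfolding q'_def by (cases i) auto
          show "q' i \<notin> P" using i False q unfolding q'_def by (cases i) auto
        qed (use q in \<open>auto simp: q'_def\<close>)
        have "inw v = u" using inw_r[OF rd'] q unfolding q'_def by simp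
        then show ?thesis using False by simp
      qed
    qed
  next
    assume rd: "ldir u (att u) q s"
    have q: "att u \<le> r" "q 0 = p (att u)" "q s = u" "0 < s" "\<forall>i<s. {q i, q (Suc i)} \<in> R \<and> f (q i) < f (q (Suc i))"
      "\<forall>i. 0 < i \<and> i \<le> s \<longrightarrow> q i \<notin> P" using rd unfolding ldir_def by auto
    obtain t where t: "s = Suc t" using q(4) by (cases s) auto
    have q1: "{u, q (s - 1)} \<in> R" "f (q (s - 1)) < f u" using q t Rsym by auto
    show ?thesis
    proof (cases "f v < f u")
      case True
      have "v = q (s - 1)" using R2l[OF uv q1(1) True q1(2)] .
      then show ?thesis using inw_l[OF rd] by simp
    next
      case False
      then have vu: "f u < f v" using fne by simp
      show ?thesis
      proof (cases "v \<in> P")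
        case True
        then obtain j where j: "j \<le> r" "v = p j" using inP by blast
        have "rdir u j (\<lambda>i. if i = 0 then u else p j) 1" unfolding rdir_def using j vu uv uP by auto
        then show ?thesis using not_both rd by blast
      next
        case False
        define q' where "q' = q(Suc s := v)"
        have rd': "ldir v (att u) q' (Suc s)" unfolding ldir_def
        proof (intro conjI allI impI)
          fix i assume i: "i < Suc s"
          show "{q' i, q' (Suc i)} \<in> R" using i uv q unfolding q'_def by (cases "i = s") auto
          show "f (q' i) < f (q' (Suc i))" using i vu q unfolding q'_def by (cases "i = s") auto
        next
          fix i assume i: "0 < i \<and> i \<le> Suc s"
          show "q' i \<notin> P" using i False q unfolding q'_def by (cases "i = Suc s") auto
        qed (use q in \<open>auto simp: q'_def\<close>)
        have "inw v = u" using inw_l[OF rd'] q unfolding q'_def by simp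
        then show ?thesis using False by simp
      qed
    qed
  qed
qed

lemma I5: "{u, v} \<in> R \<Longrightarrow> (u \<notin> P \<and> v = inw u) \<or> (v \<notin> P \<and> u = inw v)"
proof -
  assume uv: "{u, v} \<in> R"
  show ?thesis
  proof (cases "u \<in> P")
    case False then show ?thesis using I5a[OF uv] by blast
  next
    case True
    show ?thesis
    proof (cases "v \<in> P")
      case False
      have "{v, u} \<in> R" using uv Rsym by simp
      then show ?thesis using I5a[of v u] False by blast
    next
      case True
      obtain j k where "j \<le> r" "u = p j" "k \<le> r" "v = p k" using \<open>u \<in> P\<close> True inP by blast
      then show ?thesis using no_PP uv by blast
    qed
  qed
qed


definition NN where "NN = r + 3"
definition BB where "BB = 3 * NN + 3"
definition pidx where "pidx x = the_inv_into {..r} p x"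
definition gg where "gg x = (if x \<in> P then 3 * (pidx x + 2) else BB + f x)"
definition dk where "dk k x = (if f x < f (p k) then f (p k) - f x else f x - f (p k))"
definition NP where "NP = V - P"
definition cand where "cand S k s = {x \<in> S. att x = k \<and> lft x = s} \<union> {p k}"
definition istop where "istop S k s z \<longleftrightarrow> z \<in> cand S k s \<and> (\<forall>y\<in>cand S k s. dk k y \<le> dk k z)"
definition leaf :: "nat \<Rightarrow> bool \<Rightarrow> nat" where "leaf k s = 3 * (k + 2) + (if s then 1 else 2)"
definition spE where "spE = {{3 * i, 3 * (i + 1)} | i. 1 \<le> i \<and> i < NN}"
definition IE where "IE S = {{gg x, gg (inw x)} | x. x \<in> S}"
definition TE where "TE S = {{gg z, leaf k s} | z k s. k \<le> r \<and> istop S k s z}"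
definition hE where "hE S = spE \<union> IE S \<union> TE S"
definition hV where "hV S = GV NN \<union> gg ` S"
definition key where "key x = dk (att x) x * (card V + 1) + f x"
definition Sset where "Sset t = {x \<in> NP. key x < t}"

lemma pinj_on: "inj_on p {..r}"
  by (rule inj_onI) (use pinj in auto)

lemma gg_p: "k \<le> r \<Longrightarrow> gg (p k) = 3 * (k + 2)"
proof -
  assume k: "k \<le> r"
  have "pidx (p k) = k" unfolding pidx_def using the_inv_into_f_f[OF pinj_on] k by simp
  then show ?thesis using pP[OF k] unfolding gg_def by simp
qed

lemma gg_np: "x \<notin> P \<Longrightarrow> gg x = BB + f x" unfolding gg_def by simp

lemma leaf_mod: "leaf k s mod 3 \<noteq> 0"
proof -
  have "leaf k s = 3 * (k + 2) + (if s then 1 else 2)" unfolding leaf_def by simp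
  then show ?thesis using dm3[of "if s then 1 else 2" "k + 2"] by (cases s) auto
qed

lemma leaf_lt: "k \<le> r \<Longrightarrow> leaf k s < BB" unfolding leaf_def BB_def NN_def by auto

lemma leaf_ne_gg: "k \<le> r \<Longrightarrow> gg z \<noteq> leaf k s"
proof
  assume k: "k \<le> r" and e: "gg z = leaf k s"
  show False
  proof (cases "z \<in> P")
    case True
    then obtain j where "j \<le> r" "z = p j" using inP by blast
    then have "gg z = 3 * (j + 2)" using gg_p by simp
    then have "gg z mod 3 = 0" by simp
    then show False using e leaf_mod by simp
  next
    case False
    then have "gg z \<ge> BB" using gg_np by simp
    then show False using e leaf_lt[OF k, of s] by linarith
  qed
qed

lemma leaf_inj: "leaf k s = leaf k' s' \<Longrightarrow> k = k' \<and> s = s'"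
proof -
  assume e: "leaf k s = leaf k' s'"
  define a where "a = (if s then 1 else 2::nat)"
  define b where "b = (if s' then 1 else 2::nat)"
  have "leaf k s = 3 * (k + 2) + a" "leaf k' s' = 3 * (k' + 2) + b" unfolding leaf_def a_def b_def by simp_all
  moreover have "a < 3" "b < 3" unfolding a_def b_def by simp_all
  ultimately have "k + 2 = k' + 2" "a = b" using e dm3[of a "k+2"] dm3[of b "k'+2"] by metis+
  then show ?thesis unfolding a_def b_def by (auto split: if_splits)
qed

lemma leaf_notin_spE: "e \<in> spE \<Longrightarrow> leaf k s \<notin> e"
proof
  assume "e \<in> spE" "leaf k s \<in> e"
  then obtain i where "e = {3 * i, 3 * (i + 1)}" unfolding spE_def by blast
  then have "leaf k s = 3 * i \<or> leaf k s = 3 * (i + 1)" using \<open>leaf k s \<in> e\<close> by simp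
  then have "leaf k s mod 3 = 0" by auto
  then show False using leaf_mod by simp
qed

lemma dk_pk: "dk k (p k) = 0" unfolding dk_def by simp

lemma dk_pos: "k \<le> r \<Longrightarrow> x \<in> V \<Longrightarrow> x \<noteq> p k \<Longrightarrow> 0 < dk k x"
proof -
  assume a: "k \<le> r" "x \<in> V" "x \<noteq> p k"
  have "f x \<noteq> f (p k)" using feq a pV by blast
  then show ?thesis unfolding dk_def by simp
qed

lemma dk_le: "k \<le> r \<Longrightarrow> x \<in> V \<Longrightarrow> dk k x \<le> card V"
  using frng[of x] frng[of "p k"] pV unfolding dk_def by auto

lemma NP_iff: "x \<in> NP \<longleftrightarrow> x \<in> V \<and> x \<notin> P" unfolding NP_def by simp

lemma dk_inj:
  assumes S: "S \<subseteq> NP" and k: "k \<le> r" and y: "y \<in> cand S k s" and z: "z \<in> cand S k s" and d: "dk k y = dk k z"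
  shows "y = z"
proof -
  have chain: "w \<in> V \<and> w \<noteq> p k \<and> att w = k \<and> lft w = s" if "w \<in> cand S k s" "w \<noteq> p k" for w
    using that S pP[OF k] unfolding cand_def NP_def by auto
  show ?thesis
  proof (cases "y = p k")
    case True
    show ?thesis
    proof (rule ccontr)
      assume "y \<noteq> z"
      then have zk: "z \<noteq> p k" using True by simp
      then have "0 < dk k z" using dk_pos[OF k] chain[OF z zk] by simp
      then show False using d True dk_pk by simp
    qed
  next
    case False
    note yk = False
    show ?thesis
    proof (cases "z = p k")
      case True
      have "0 < dk k y" using dk_pos[OF k] chain[OF y yk] by simp
      then show ?thesis using d True dk_pk by simp
    next
      case False
      have cy: "y \<in> V" "att y = k" "lft y = s" using chain[OF y yk] by auto
      have cz: "z \<in> V" "att z = k" "lft z = s" using chain[OF z False] by auto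
      have ny: "f y \<noteq> f (p k)" using feq cy(1) pV k yk by blast
      have nz: "f z \<noteq> f (p k)" using feq cz(1) pV k False by blast
      have "f y = f z"
      proof (cases s)
        case True
        then have "f y < f (p k)" "f z < f (p k)" using cy cz unfolding lft_def by auto
        then show ?thesis using d unfolding dk_def by simp
      next
        case False
        then have "f (p k) < f y" "f (p k) < f z" using cy cz ny nz unfolding lft_def by auto
        then show ?thesis using d unfolding dk_def by simp
      qed
      then show ?thesis using feq cy(1) cz(1) by blast
    qed
  qed
qed

lemma istop_uniq: "S \<subseteq> NP \<Longrightarrow> k \<le> r \<Longrightarrow> istop S k s a \<Longrightarrow> istop S k s b \<Longrightarrow> a = b"
proof -
  assume a: "S \<subseteq> NP" "k \<le> r" "istop S k s a" "istop S k s b"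
  then have "dk k a = dk k b" unfolding istop_def by (meson le_antisym)
  then show ?thesis using dk_inj[OF a(1,2)] a(3,4) unfolding istop_def by blast
qed

lemma modM: "(a::nat) < M \<Longrightarrow> (d * M + a) mod M = a"
proof -
  assume a: "a < M"
  have "(a + d * M) mod M = a mod M" by (rule mod_mult_self1)
  moreover have "a + d * M = d * M + a" by simp
  ultimately show ?thesis using a by simp
qed

lemma key_mono:
  assumes x: "x \<in> NP" and y: "y \<in> NP" and lt: "dk (att y) y < dk (att x) x"
  shows "key y < key x"
proof -
  define M where "M = card V + 1"
  have fy: "f y < M" using frng[of y] y unfolding M_def NP_def by auto
  have "key y = dk (att y) y * M + f y" unfolding key_def M_def by simp
  also have "\<dots> < dk (att y) y * M + M" using fy by simp
  also have "\<dots> = Suc (dk (att y) y) * M" by simp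
  also have "\<dots> \<le> dk (att x) x * M" using lt by (intro mult_le_mono1) simp
  also have "\<dots> \<le> key x" unfolding key_def M_def by simp
  finally show ?thesis .
qed

lemma key_dk: "x \<in> NP \<Longrightarrow> y \<in> NP \<Longrightarrow> key y < key x \<Longrightarrow> dk (att y) y \<le> dk (att x) x"
  using key_mono[of y x] by (meson not_le less_asym)

lemma key_inj: "x \<in> NP \<Longrightarrow> y \<in> NP \<Longrightarrow> key x = key y \<Longrightarrow> x = y"
proof -
  assume a: "x \<in> NP" "y \<in> NP" "key x = key y"
  define M where "M = card V + 1"
  have fx: "f x < M" "f y < M" using frng[of x] frng[of y] a unfolding M_def NP_def by auto
  have "key x = dk (att x) x * M + f x" "key y = dk (att y) y * M + f y" unfolding key_def M_def by simp_all
  then have "key x mod M = f x" "key y mod M = f y" using modM[OF fx(1)] modM[OF fx(2)] by simp_all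
  then have "f x = f y" using a by simp
  then show ?thesis using feq a unfolding NP_def by blast
qed

lemma key_bound: "x \<in> NP \<Longrightarrow> key x < Suc (card V) * Suc (card V)"
proof -
  assume x: "x \<in> NP"
  have d: "dk (att x) x \<le> card V" using dk_le att_le x unfolding NP_def by simp
  have fx: "f x \<le> card V" using frng x unfolding NP_def by simp
  have "key x \<le> card V * Suc (card V) + card V" unfolding key_def
    using mult_le_mono1[OF d, of "Suc (card V)"] fx by simp
  also have "\<dots> < Suc (card V) * Suc (card V)" by simp
  finally show ?thesis .
qed

lemma Sset_sub: "Sset t \<subseteq> NP" unfolding Sset_def by auto

lemma IE_I: "y \<in> S \<Longrightarrow> {gg y, gg (inw y)} \<in> IE S"
  unfolding IE_def by (rule CollectI, rule exI[of _ y]) simp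
lemma IE_E: "e \<in> IE S \<Longrightarrow> \<exists>y. y \<in> S \<and> e = {gg y, gg (inw y)}"
  unfolding IE_def by auto
lemma TE_I: "k \<le> r \<Longrightarrow> istop S k s z \<Longrightarrow> {gg z, leaf k s} \<in> TE S"
  unfolding TE_def by (rule CollectI, rule exI[of _ z], rule exI[of _ k], rule exI[of _ s]) simp
lemma TE_E: "e \<in> TE S \<Longrightarrow> \<exists>z k s. k \<le> r \<and> istop S k s z \<and> e = {gg z, leaf k s}"
  unfolding TE_def by auto

lemma dk_side_l: "k \<le> r \<Longrightarrow> f y \<le> f (p k) \<Longrightarrow> dk k y = f (p k) - f y"
  unfolding dk_def by auto
lemma dk_side_r: "k \<le> r \<Longrightarrow> f (p k) \<le> f y \<Longrightarrow> dk k y = f y - f (p k)"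
  unfolding dk_def by auto

context
  fixes x assumes xNP: "x \<in> NP"
begin

definition "S0 = Sset (key x)"
definition "kx = att x"
definition "sx = lft x"
definition "ix = inw x"

lemma xV: "x \<in> V" "x \<notin> P" using xNP unfolding NP_def by auto
lemma kx_le: "kx \<le> r" unfolding kx_def using att_le xV by simp
lemma x_notin: "x \<notin> S0" unfolding S0_def Sset_def by simp
lemma S0_sub: "S0 \<subseteq> NP" unfolding S0_def by (rule Sset_sub)
lemma fxk: "f x \<noteq> f (p kx)"
proof
  assume "f x = f (p kx)"
  then have "x = p kx" using feq xV(1) pV kx_le by simp
  then show False using xV(2) pP[OF kx_le] by simp
qed
lemma sx_iff: "sx \<longleftrightarrow> f x < f (p kx)" unfolding sx_def kx_def lft_def by simp

lemma ix_facts: "ix = p kx \<or> (ix \<in> NP \<and> att ix = kx \<and> lft ix = sx)"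
  using I2[OF xV] unfolding ix_def kx_def sx_def NP_def by blast

lemma ix_side: "(sx \<longrightarrow> f x < f ix \<and> f ix \<le> f (p kx)) \<and> (\<not> sx \<longrightarrow> f ix < f x \<and> f (p kx) \<le> f ix)"
proof -
  have i1: "{x, ix} \<in> R" "f x < f ix \<longleftrightarrow> sx" using I1[OF xV] unfolding ix_def sx_def by auto
  have "ix \<in> V" "x \<noteq> ix" using Redge[OF i1(1)] by auto
  then have fne: "f x \<noteq> f ix" using feq xV by blast
  have side: "(sx \<longrightarrow> f ix \<le> f (p kx)) \<and> (\<not> sx \<longrightarrow> f (p kx) \<le> f ix)"
  proof (cases "ix = p kx")
    case True then show ?thesis by simp
  next
    case False
    then have ii: "ix \<in> NP" "att ix = kx" "lft ix = sx" using ix_facts by auto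
    have "f ix \<noteq> f (p kx)" using feq ii(1) pV kx_le False unfolding NP_def by blast
    then show ?thesis using ii unfolding lft_def by auto
  qed
  show ?thesis using i1 fne side by auto
qed

lemma dk_ix: "dk kx ix < dk kx x"
proof (cases sx)
  case True
  then have "f x < f ix" "f ix \<le> f (p kx)" "f x < f (p kx)" using ix_side sx_iff by auto
  then show ?thesis using dk_side_l[OF kx_le] by simp
next
  case False
  then have "f ix < f x" "f (p kx) \<le> f ix" "f (p kx) \<le> f x" using ix_side sx_iff by auto
  then show ?thesis using dk_side_r[OF kx_le] by simp
qed

lemma x_cand: "x \<in> cand (insert x S0) kx sx" unfolding cand_def kx_def sx_def by simp

lemma ix_cand: "ix \<in> cand S0 kx sx"
proof (cases "ix = p kx")
  case True then show ?thesis unfolding cand_def by simp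
next
  case False
  then have ii: "ix \<in> NP" "att ix = kx" "lft ix = sx" using ix_facts by auto
  have "dk (att ix) ix < dk (att x) x" using dk_ix ii unfolding kx_def by simp
  then have "key ix < key x" using key_mono[OF xNP ii(1)] by simp
  then have "ix \<in> S0" using ii unfolding S0_def Sset_def by simp
  then show ?thesis using ii unfolding cand_def by simp
qed

lemma cand_lt: "y \<in> cand S0 kx sx \<Longrightarrow> dk kx y < dk kx x"
proof -
  assume y: "y \<in> cand S0 kx sx"
  show ?thesis
  proof (cases "y = p kx")
    case True then show ?thesis using dk_pk dk_ix by simp
  next
    case False
    then have yS: "y \<in> S0" "att y = kx" "lft y = sx" using y unfolding cand_def by auto
    then have yNP: "y \<in> NP" using S0_sub by auto
    have "key y < key x" using yS unfolding S0_def Sset_def by simp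
    then have le: "dk kx y \<le> dk kx x" using key_dk[OF xNP yNP] yS unfolding kx_def by simp
    have "y \<noteq> x" using yS x_notin by auto
    moreover have "y \<in> cand (insert x S0) kx sx" using yS unfolding cand_def by simp
    ultimately have "dk kx y \<noteq> dk kx x"
      using dk_inj[of "insert x S0" kx y sx x] S0_sub xNP kx_le x_cand by auto
    then show ?thesis using le by simp
  qed
qed

lemma istop_ix: "istop S0 kx sx ix"
  unfolding istop_def
proof (intro conjI ballI)
  show "ix \<in> cand S0 kx sx" by (rule ix_cand)
  fix y assume y: "y \<in> cand S0 kx sx"
  show "dk kx y \<le> dk kx ix"
  proof (rule ccontr)
    assume c: "\<not> dk kx y \<le> dk kx ix"
    have lt: "dk kx y < dk kx x" using cand_lt[OF y] .
    have "y \<noteq> p kx" using c dk_pk by auto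
    then have yS: "y \<in> S0" "att y = kx" "lft y = sx" using y unfolding cand_def by auto
    then have yV: "y \<in> V" "y \<notin> P" using S0_sub unfolding NP_def by auto
    have fyk: "f y \<noteq> f (p kx)" using feq yV pV kx_le pP by blast
    show False
    proof (cases sx)
      case True
      have s: "f x < f ix" "f ix \<le> f (p kx)" "f x < f (p kx)" using ix_side sx_iff True by auto
      have fy: "f y < f (p kx)" using yS True unfolding lft_def by simp
      have "f x < f y" "f y < f ix" using c lt s fy dk_side_l[OF kx_le] by auto
      then show False using I3r[OF xV yV] yS True unfolding ix_def by simp
    next
      case False
      have s: "f ix < f x" "f (p kx) \<le> f ix" "f (p kx) \<le> f x" using ix_side sx_iff False by auto
      have fy: "f (p kx) < f y" using yS False fyk unfolding lft_def by auto
      have "f ix < f y" "f y < f x" using c lt s fy dk_side_r[OF kx_le] by auto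
      then show False using I3l[OF xV yV] yS False unfolding ix_def by simp
    qed
  qed
qed

lemma cand_ins: "cand (insert x S0) kx sx = insert x (cand S0 kx sx)"
  unfolding cand_def kx_def sx_def by auto

lemma istop_x: "istop (insert x S0) kx sx x"
  unfolding istop_def
proof (intro conjI ballI)
  show "x \<in> cand (insert x S0) kx sx" by (rule x_cand)
  fix y assume "y \<in> cand (insert x S0) kx sx"
  then have "y = x \<or> y \<in> cand S0 kx sx" using cand_ins by auto
  then show "dk kx y \<le> dk kx x"
  proof
    assume "y \<in> cand S0 kx sx"
    then have "dk kx y < dk kx x" by (rule cand_lt)
    then show ?thesis by simp
  qed simp
qed

lemma cand_other: "(k, s) \<noteq> (kx, sx) \<Longrightarrow> cand (insert x S0) k s = cand S0 k s"
  unfolding cand_def kx_def sx_def by auto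

lemma istop_S0_iff: "istop S0 kx sx z \<longleftrightarrow> z = ix"
  using istop_uniq[OF S0_sub kx_le] istop_ix by blast

lemma istop_S1_iff: "istop (insert x S0) kx sx z \<longleftrightarrow> z = x"
  using istop_uniq[of "insert x S0" kx sx] S0_sub xNP kx_le istop_x by blast

lemma istop_other: "(k, s) \<noteq> (kx, sx) \<Longrightarrow> istop (insert x S0) k s z \<longleftrightarrow> istop S0 k s z"
  unfolding istop_def using cand_other by simp

lemma hE_step:
  "hE (insert x S0) = (hE S0 - {{gg ix, leaf kx sx}}) \<union> {{gg ix, gg x}, {gg x, leaf kx sx}}"
  (is "?L = ?R")
proof
  show "?L \<subseteq> ?R"
  proof
    fix e assume e: "e \<in> ?L"
    then consider "e \<in> spE" | "e \<in> IE (insert x S0)" | "e \<in> TE (insert x S0)" unfolding hE_def by blast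
    then show "e \<in> ?R"
    proof cases
      case 1
      then have "e \<noteq> {gg ix, leaf kx sx}" using leaf_notin_spE[OF 1, of kx sx] by auto
      then show ?thesis using 1 unfolding hE_def by simp
    next
      case 2
      then obtain y where y: "y \<in> insert x S0" "e = {gg y, gg (inw y)}" using IE_E by blast
      show ?thesis
      proof (cases "y = x")
        case True then show ?thesis using y unfolding ix_def by (simp add: insert_commute)
      next
        case False
        then have "e \<in> IE S0" using y IE_I by simp
        moreover have "e \<noteq> {gg ix, leaf kx sx}"
        proof
          assume "e = {gg ix, leaf kx sx}"
          then have "leaf kx sx \<in> {gg y, gg (inw y)}" using y by simp
          then show False using leaf_ne_gg[OF kx_le, of y sx] leaf_ne_gg[OF kx_le, of "inw y" sx] by auto
        qed
        ultimately show ?thesis unfolding hE_def by simp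
      qed
    next
      case 3
      then obtain z k s where z: "k \<le> r" "istop (insert x S0) k s z" "e = {gg z, leaf k s}"
        using TE_E by blast
      show ?thesis
      proof (cases "(k, s) = (kx, sx)")
        case True
        then have "z = x" using z istop_S1_iff by simp
        then show ?thesis using z True by simp
      next
        case False
        then have "istop S0 k s z" using z istop_other by simp
        then have "e \<in> TE S0" using z TE_I by simp
        moreover have "e \<noteq> {gg ix, leaf kx sx}"
        proof
          assume "e = {gg ix, leaf kx sx}"
          then have "leaf kx sx \<in> {gg z, leaf k s}" using z by simp
          then have "leaf kx sx = leaf k s" using leaf_ne_gg[OF kx_le, of z sx] by auto
          then show False using leaf_inj False by blast
        qed
        ultimately show ?thesis unfolding hE_def by simp
      qed
    qed
  qed
  show "?R \<subseteq> ?L"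
  proof
    fix e assume e: "e \<in> ?R"
    then consider "e \<in> hE S0" "e \<noteq> {gg ix, leaf kx sx}" | "e = {gg ix, gg x}" | "e = {gg x, leaf kx sx}" by blast
    then show "e \<in> ?L"
    proof cases
      case 1
      from 1(1) consider "e \<in> spE" | "e \<in> IE S0" | "e \<in> TE S0" unfolding hE_def by blast
      then show ?thesis
      proof cases
        case 1 then show ?thesis unfolding hE_def by simp
      next
        case 2 then obtain y where "y \<in> S0" "e = {gg y, gg (inw y)}" using IE_E by blast
        then have "e \<in> IE (insert x S0)" using IE_I[of y "insert x S0"] by simp
        then show ?thesis unfolding hE_def by simp
      next
        case 3
        then obtain z k s where z: "k \<le> r" "istop S0 k s z" "e = {gg z, leaf k s}"
          using TE_E by blast
        show ?thesis
        proof (cases "(k, s) = (kx, sx)")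
          case True
          then have "z = ix" using z istop_S0_iff by simp
          then show ?thesis using z True \<open>e \<noteq> {gg ix, leaf kx sx}\<close> by simp
        next
          case False
          then have "istop (insert x S0) k s z" using z istop_other by simp
          then have "e \<in> TE (insert x S0)" using z TE_I by simp
          then show ?thesis unfolding hE_def by simp
        qed
      qed
    next
      case 2
      then have "e = {gg x, gg (inw x)}" unfolding ix_def by (simp add: insert_commute)
      then have "e \<in> IE (insert x S0)" using IE_I[of x "insert x S0"] by simp
      then show ?thesis unfolding hE_def by simp
    next
      case 3
      then have "e \<in> TE (insert x S0)" using kx_le istop_x TE_I by simp
      then show ?thesis unfolding hE_def by simp
    qed
  qed
qed

lemma GV_le: "y \<in> GV n \<Longrightarrow> y \<le> 3 * n + 2" unfolding GV_def by auto

lemma step_x: "subdiv_step (hV S0) (hE S0) (hV (insert x S0)) (hE (insert x S0))"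
  unfolding subdiv_step_def
proof (intro exI conjI)
  show "{gg ix, leaf kx sx} \<in> hE S0" unfolding hE_def using TE_I[OF kx_le istop_ix] by simp
  show "gg ix \<noteq> leaf kx sx" using leaf_ne_gg[OF kx_le] by simp
  show "gg x \<notin> hV S0"
  proof
    assume "gg x \<in> hV S0"
    then consider "gg x \<in> GV NN" | "gg x \<in> gg ` S0" unfolding hV_def by blast
    then show False
    proof cases
      case 1
      then have "gg x \<le> 3 * NN + 2" by (rule GV_le)
      then show False using gg_np[OF xV(2)] unfolding BB_def by simp
    next
      case 2
      then obtain y where y: "y \<in> S0" "gg y = gg x" by auto
      then have "y \<notin> P" using S0_sub unfolding NP_def by auto
      then have "f y = f x" using y gg_np xV by simp
      then have "y = x" using feq y S0_sub xV unfolding NP_def by blast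
      then show False using y x_notin by simp
    qed
  qed
  show "hV (insert x S0) = insert (gg x) (hV S0)" unfolding hV_def by auto
  show "hE (insert x S0) = hE S0 - {{gg ix, leaf kx sx}} \<union> {{gg ix, gg x}, {gg x, leaf kx sx}}"
    by (rule hE_step)
qed

end

lemma Sset_Suc: "Sset (Suc t) = Sset t \<union> {x \<in> NP. key x = t}"
  unfolding Sset_def by auto

lemma hE0: "hE {} = GE NN"
proof -
  have IE0: "IE {} = {}" unfolding IE_def by simp
  have top0: "istop {} k s z \<longleftrightarrow> z = p k" for k s z unfolding istop_def cand_def by auto
  have "TE {} = {{3 * i, 3 * i + 1} | i. 2 \<le> i \<and> i + 1 \<le> NN} \<union> {{3 * i, 3 * i + 2} | i. 2 \<le> i \<and> i + 1 \<le> NN}"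
  proof
    show "TE {} \<subseteq> {{3 * i, 3 * i + 1} | i. 2 \<le> i \<and> i + 1 \<le> NN} \<union> {{3 * i, 3 * i + 2} | i. 2 \<le> i \<and> i + 1 \<le> NN}"
    proof
      fix e assume "e \<in> TE {}"
      then obtain z k s where "k \<le> r" "istop {} k s z" "e = {gg z, leaf k s}" using TE_E by blast
      then have ks: "k \<le> r" "e = {gg (p k), leaf k s}" using top0 by auto
      then have e: "e = {3 * (k + 2), 3 * (k + 2) + (if s then 1 else 2)}" using gg_p unfolding leaf_def by simp
      have i: "2 \<le> k + 2" "k + 2 + 1 \<le> NN" using ks unfolding NN_def by auto
      show "e \<in> {{3 * i, 3 * i + 1} | i. 2 \<le> i \<and> i + 1 \<le> NN} \<union> {{3 * i, 3 * i + 2} | i. 2 \<le> i \<and> i + 1 \<le> NN}"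
      proof (cases s)
        case True
        then have ee: "e = {3 * (k + 2), 3 * (k + 2) + 1}" using e by simp
        have "e \<in> {{3 * i, 3 * i + 1} | i. 2 \<le> i \<and> i + 1 \<le> NN}"
          by (simp only: mem_Collect_eq) (rule exI[of _ "k+2"], use i ee in simp)
        then show ?thesis by simp
      next
        case False
        then have ee: "e = {3 * (k + 2), 3 * (k + 2) + 2}" using e by simp
        have "e \<in> {{3 * i, 3 * i + 2} | i. 2 \<le> i \<and> i + 1 \<le> NN}"
          by (simp only: mem_Collect_eq) (rule exI[of _ "k+2"], use i ee in simp)
        then show ?thesis by simp
      qed
    qed
    show "{{3 * i, 3 * i + 1} | i. 2 \<le> i \<and> i + 1 \<le> NN} \<union> {{3 * i, 3 * i + 2} | i. 2 \<le> i \<and> i + 1 \<le> NN} \<subseteq> TE {}"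
    proof
      fix e assume "e \<in> {{3 * i, 3 * i + 1} | i. 2 \<le> i \<and> i + 1 \<le> NN} \<union> {{3 * i, 3 * i + 2} | i. 2 \<le> i \<and> i + 1 \<le> NN}"
      have mk: "{3 * i, 3 * i + (if s then 1 else 2)} \<in> TE {}" if i: "2 \<le> i" "i + 1 \<le> NN" for i s
      proof -
        define k where "k = i - 2"
        have k: "k \<le> r" "i = k + 2" using i unfolding k_def NN_def by auto
        then have "{3 * i, 3 * i + (if s then 1 else 2)} = {gg (p k), leaf k s}" using gg_p unfolding leaf_def by simp
        then show ?thesis using TE_I[of k "{}" s "p k"] top0 k by simp
      qed
      from \<open>e \<in> _\<close> show "e \<in> TE {}"
      proof (elim UnE CollectE exE conjE)
        fix i assume "e = {3 * i, 3 * i + 1}" "2 \<le> i" "i + 1 \<le> NN"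
        then show ?thesis using mk[of i True] by simp
      next
        fix i assume "e = {3 * i, 3 * i + 2}" "2 \<le> i" "i + 1 \<le> NN"
        then show ?thesis using mk[of i False] by simp
      qed
    qed
  qed
  then show ?thesis unfolding hE_def GE_def spE_def IE0 by auto
qed

lemma hV0: "hV {} = GV NN" unfolding hV_def by simp

lemma subdiv_all: "subdivision (GV NN) (GE NN) (hV (Sset t)) (hE (Sset t))"
proof (induction t)
  case 0
  have "Sset 0 = {}" unfolding Sset_def by simp
  then show ?case using hE0 hV0 subdivision.refl by simp
next
  case (Suc t)
  show ?case
  proof (cases "\<exists>x\<in>NP. key x = t")
    case False
    then have "Sset (Suc t) = Sset t" using Sset_Suc by auto
    then show ?thesis using Suc by simp
  next
    case True
    then obtain x where x: "x \<in> NP" "key x = t" by blast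
    have "{y \<in> NP. key y = t} = {x}" using key_inj x by auto
    then have e: "Sset (Suc t) = insert x (Sset (key x))" using Sset_Suc x by auto
    have "subdiv_step (hV (Sset (key x))) (hE (Sset (key x))) (hV (insert x (Sset (key x)))) (hE (insert x (Sset (key x))))"
      using step_x[OF x(1)] unfolding S0_def[OF x(1)] .
    then show ?thesis using Suc x e subdivision.step by metis
  qed
qed

lemma Sset_all: "Sset (Suc (card V) * Suc (card V)) = NP"
  unfolding Sset_def using key_bound by auto


lemma gg_inj: "inj_on gg V"
proof (rule inj_onI)
  fix u v assume u: "u \<in> V" and v: "v \<in> V" and e: "gg u = gg v"
  have bndP: "gg z < BB" if zP: "z \<in> P" for z
  proof -
    obtain k where "k \<le> r" "z = p k" using zP inP by blast
    then show ?thesis using gg_p unfolding BB_def NN_def by simp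
  qed
  show "u = v"
  proof (cases "u \<in> P")
    case True
    note uP = True
    show ?thesis
    proof (cases "v \<in> P")
      case True
      obtain a b where ab: "a \<le> r" "u = p a" "b \<le> r" "v = p b" using uP True inP by blast
      then have "3 * (a + 2) = 3 * (b + 2)" using e gg_p by simp
      then show ?thesis using ab by simp
    next
      case False
      then show ?thesis using bndP[OF uP] e gg_np[OF False] by simp
    qed
  next
    case False
    note uP = False
    show ?thesis
    proof (cases "v \<in> P")
      case True
      then show ?thesis using bndP[OF True] e gg_np[OF uP] by simp
    next
      case False
      then have "f u = f v" using e gg_np uP by simp
      then show ?thesis using feq u v by blast
    qed
  qed
qed

lemma gg_V: "gg ` V \<subseteq> hV NP"
proof
  fix y assume "y \<in> gg ` V"
  then obtain x where x: "x \<in> V" "y = gg x" by blast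
  show "y \<in> hV NP"
  proof (cases "x \<in> P")
    case True
    then obtain k where k: "k \<le> r" "x = p k" using inP by blast
    then have "y = 3 * (k + 2)" using x gg_p by simp
    moreover have "3 * (k + 2) \<in> {3 * i | i. 1 \<le> i \<and> i \<le> NN}"
      by (simp only: mem_Collect_eq) (rule exI[of _ "k+2"], use k in \<open>simp add: NN_def\<close>)
    ultimately show ?thesis unfolding hV_def GV_def by simp
  next
    case False
    then have "x \<in> NP" using x unfolding NP_def by simp
    then show ?thesis using x unfolding hV_def by simp
  qed
qed

lemma gg_edges: "{u, v} \<in> E \<Longrightarrow> {gg u, gg v} \<in> hE NP"
proof -
  assume uvE: "{u, v} \<in> E"
  show ?thesis
  proof (cases "{u, v} \<in> SE")
    case True
    then obtain i where i: "i < r" "{u, v} = {p i, p (Suc i)}" unfolding SE_def by blast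
    have gi: "gg (p i) = 3 * (i + 2)" "gg (p (Suc i)) = 3 * ((i + 2) + 1)" using gg_p i by auto
    have "{gg u, gg v} = {gg (p i), gg (p (Suc i))}" using i(2) by (auto simp: doubleton_eq_iff)
    then have eq: "{gg u, gg v} = {3 * (i + 2), 3 * ((i + 2) + 1)}" using gi by simp
    have "{gg u, gg v} \<in> spE" unfolding spE_def
      by (simp only: mem_Collect_eq) (rule exI[of _ "i+2"], use i eq in \<open>simp add: NN_def\<close>)
    then show ?thesis unfolding hE_def by simp
  next
    case False
    then have uvR: "{u, v} \<in> R" using uvE unfolding R_def by simp
    have uvV: "u \<in> V" "v \<in> V" using Redge[OF uvR] by auto
    from I5[OF uvR] show ?thesis
    proof
      assume a: "u \<notin> P \<and> v = inw u"
      then have "u \<in> NP" using uvV unfolding NP_def by simp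
      then have "{gg u, gg (inw u)} \<in> IE NP" by (rule IE_I)
      then show ?thesis using a unfolding hE_def by simp
    next
      assume a: "v \<notin> P \<and> u = inw v"
      then have "v \<in> NP" using uvV unfolding NP_def by simp
      then have "{gg v, gg (inw v)} \<in> IE NP" by (rule IE_I)
      then show ?thesis using a unfolding hE_def by (simp add: insert_commute)
    qed
  qed
qed

lemma forward_loc:
  "\<exists>n\<ge>2. \<exists>(HV :: nat set) HE. homeomorphic HV HE (GV n) (GE n) \<and>
       (\<exists>V' E'. subgraph V' E' HV HE \<and> graph_iso V E V' E')"
proof -
  have n2: "2 \<le> NN" unfolding NN_def by simp
  have sd: "subdivision (GV NN) (GE NN) (hV NP) (hE NP)" using subdiv_all[of "Suc (card V) * Suc (card V)"] Sset_all by simp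
  have gH: "graph (hV NP) (hE NP)" using graph_subdiv[OF sd graph_G] .
  have iso: "graph_iso (hV NP) (hE NP) (hV NP) (hE NP)"
    unfolding graph_iso_def by (rule exI[of _ id]) simp
  have hom: "homeomorphic (hV NP) (hE NP) (GV NN) (GE NN)"
    unfolding homeomorphic_def using gH graph_G subdivision.refl sd iso by blast
  obtain V' E' where sg: "subgraph V' E' (hV NP) (hE NP)" "graph_iso V E V' E'"
    using embed[OF g gg_inj gg_V] gg_edges by blast
  show ?thesis
    by (rule exI[of _ NN], rule conjI[OF n2], rule exI[of _ "hV NP"], rule exI[of _ "hE NP"],
        rule conjI[OF hom], rule exI[of _ V'], rule exI[of _ E']) (use sg in simp)
qed

end

theorem backward:
  assumes t: "tree V E" and h: "homeomorphic HV HE (GV n) (GE n)"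
    and sg: "subgraph V' E' HV HE" and iso: "graph_iso V E V' E'"
  shows "cutwidth_le2 V E"
proof -
  have gV: "graph V E" using t unfolding tree_def by simp
  obtain S1 F1 S2 F2 where gH: "graph HV HE" and gG: "graph (GV n) (GE n)"
    and s1: "subdivision HV HE S1 F1" and s2: "subdivision (GV n) (GE n) S2 F2"
    and i: "graph_iso S1 F1 S2 F2" using h unfolding homeomorphic_def by blast
  obtain f2 where "lay S2 F2 f2" using lay_subdiv[OF s2 gG lay_G] by blast
  moreover have "finite F2" using graph_finE graph_subdiv[OF s2 gG] by blast
  moreover have "graph S1 F1" using graph_subdiv[OF s1 gH] .
  ultimately obtain f1 where "lay S1 F1 f1" using lay_iso i by blast
  then have "lay HV HE f1" using lay_unsubdiv[OF s1 gH] by blast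
  then have "lay V' E' f1" using lay_mono sg graph_finE[OF gH] unfolding subgraph_def by blast
  moreover have "finite E'" using sg graph_finE unfolding subgraph_def by blast
  ultimately obtain f where "lay V E f" using lay_iso[OF gV iso] by blast
  then show ?thesis using lay_to_cw[OF gV] by blast
qed

theorem mainTheorem2:
  fixes V :: "'a set" and E :: "'a set set"
  assumes "tree V E"
  shows "cutwidth_le2 V E \<longleftrightarrow>
    (\<exists>n\<ge>2. \<exists>(HV :: nat set) HE. homeomorphic HV HE (GV n) (GE n) \<and>
       (\<exists>V' E'. subgraph V' E' HV HE \<and> graph_iso V E V' E'))"
proof
  assume c: "cutwidth_le2 V E"
  have gV: "graph V E" and conn: "connected_graph V E" and acyc: "\<not> has_cycle V E"
    using assms unfolding tree_def by auto
  obtain f where fb: "bij_betw f V {1..card V}" and cw: "\<forall>i. card (cross f E i) \<le> 2"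
    using cw_bij[OF gV c] by blast
  obtain p r where p: "\<forall>i\<le>r. p i \<in> V" "\<forall>i<r. {p i, p (Suc i)} \<in> E"
     "\<forall>i<r. f (p i) < f (p (Suc i))" "f (p 0) = 1" "f (p r) = card V"
    using spine_exists[OF assms fb cw] by blast
  interpret spine V E f p r
    using gV conn acyc fb cw p by unfold_locales auto
  show "\<exists>n\<ge>2. \<exists>(HV :: nat set) HE. homeomorphic HV HE (GV n) (GE n) \<and>
       (\<exists>V' E'. subgraph V' E' HV HE \<and> graph_iso V E V' E')" by (rule forward_loc)
next
  assume "\<exists>n\<ge>2. \<exists>(HV :: nat set) HE. homeomorphic HV HE (GV n) (GE n) \<and>
       (\<exists>V' E'. subgraph V' E' HV HE \<and> graph_iso V E V' E')"
  then obtain n HV HE V' E' where h: "homeomorphic HV HE (GV n) (GE n)"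
    and s: "subgraph V' E' HV HE" and i: "graph_iso V E V' E'" by blast
  show "cutwidth_le2 V E" using backward[OF assms h s i] .
qed


end
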